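(* Let $t$ be a positive odd integer. Then $$\sum_{n\geq1} a_t^{\star}(n) \, q^n=\frac{q^t\big(1+(t-1)q^t+tq^{2t}\big)}{(1-q^{2t})(1+q^t)}\cdot (-q;q^2)_{\infty},$$ and consequently, for every integer $n\ge1$, $$a_t^{\star}(n)=\sum_{j\geq 1}\Big((-1)^{j-1}j \, sc(n-tj)+t\, sc(n-2tj)\Big)=\sum_{j\geq 1}\Big((-1)^{j-1}j \, q^{\star}(n-tj)+t\, q^{\star}(n-2tj)\Big).$$
   Context: A partition $\lambda=(\lambda_1\ge\dots\ge\lambda_\ell\ge 1)$ of $n$ has $\sum_i\lambda_i=n$; its Young diagram has $\lambda_i$ left-justified cells in row $i$. The conjugate $\lambda'$ is obtained by reflecting the Young diagram in the main diagonal; $\lambda$ is self-conjugate if $\lambda=\lambda'$, and $\mathcal{SC}$ is the set of self-conjugate partitions. The hook length of the cell $(i,j)$ is the number of cells to its right in row $i$ plus the number below it in column $j$ plus $1$; $n_t(\lambda)$ is the number of cells of $\lambda$ with hook length $t$. Define $a_t^{\star}(n)=\sum_{\lambda\in\mathcal{SC},\,\lambda\vdash n} n_t(\lambda)$. $sc(m)$ is the number of self-conjugate partitions of $m$, $q^{\star}(m)$ is the number of partitions of $m$ into distinct odd parts, with $sc(0)=q^\star(0)=1$ and $sc(m)=q^\star(m)=0$ for $m<0$. $(a;q)_\infty=\prod_{j\ge0}(1-aq^j)$. *)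

theory Defs
  imports Complex_Main "HOL-Computational_Algebra.Formal_Power_Series"
begin

definition is_partition :: "nat list \<Rightarrow> bool" where
  "is_partition lam \<longleftrightarrow> sorted_wrt (\<ge>) lam \<and> (\<forall>x\<in>set lam. 0 < x)"

definition partition_of :: "nat list \<Rightarrow> nat \<Rightarrow> bool" where
  "partition_of lam n \<longleftrightarrow> is_partition lam \<and> sum_list lam = n"

definition conj_part :: "nat list \<Rightarrow> nat list" where
  "conj_part lam = map (\<lambda>j. length (filter (\<lambda>x. j \<le> x) lam)) [1..<Suc (foldr max lam 0)]"

definition self_conj :: "nat list \<Rightarrow> bool" where
  "self_conj lam \<longleftrightarrow> conj_part lam = lam"

definition cells :: "nat list \<Rightarrow> (nat \<times> nat) set" where
  "cells lam = {(i, j). 1 \<le> i \<and> i \<le> length lam \<and> 1 \<le> j \<and> j \<le> lam ! (i - 1)}"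

text \<open>Hook length: arm (cells to the right) + leg (cells below) + 1.\<close>
definition hook :: "nat list \<Rightarrow> nat \<Rightarrow> nat \<Rightarrow> nat" where
  "hook lam i j = (lam ! (i - 1) - j) + (conj_part lam ! (j - 1) - i) + 1"

definition n_hook :: "nat \<Rightarrow> nat list \<Rightarrow> nat" where
  "n_hook t lam = card {c \<in> cells lam. hook lam (fst c) (snd c) = t}"

definition a_star :: "nat \<Rightarrow> nat \<Rightarrow> nat" where
  "a_star t n = (\<Sum>lam \<in> {lam. partition_of lam n \<and> self_conj lam}. n_hook t lam)"

definition sc :: "int \<Rightarrow> nat" where
  "sc m = (if m < 0 then 0 else card {lam. partition_of lam (nat m) \<and> self_conj lam})"

definition qstar :: "int \<Rightarrow> nat" where
  "qstar m = (if m < 0 then 0 else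
     card {S :: nat set. finite S \<and> (\<forall>x\<in>S. odd x) \<and> \<Sum>S = nat m})"

text \<open>(-q;q^2)_infinity = prod_{j>=0} (1 + q^(2j+1)), as a limit of partial products in the
  standard (X-adic) topology on formal power series.\<close>
definition odd_poch :: "real fps" where
  "odd_poch = lim (\<lambda>N. \<Prod>j<N. 1 + fps_X ^ (2 * j + 1))"

end

theory Submission
  imports Defs
begin


definition Lf :: "nat list \<Rightarrow> nat \<Rightarrow> nat" where
  "Lf lam r = (if r < length lam then lam ! r else 0)"
definition Cf :: "nat list \<Rightarrow> nat \<Rightarrow> nat" where
  "Cf lam c = length (filter (\<lambda>x. Suc c \<le> x) lam)"
definition pf :: "nat list \<Rightarrow> nat \<Rightarrow> int" where
  "pf lam r = int (Lf lam r) - int r - 1"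

lemma part_nth_mono:
  assumes "is_partition lam" "i \<le> j" "j < length lam"
  shows "lam ! j \<le> lam ! i"
proof (cases "i = j")
  case False
  then have "i < j" using assms by simp
  with assms show ?thesis
    using sorted_wrt_nth_less[of "(\<ge>)" lam i j] by (auto simp: is_partition_def)
qed simp

lemma Lf_mono:
  assumes "is_partition lam" "i \<le> j"
  shows "Lf lam j \<le> Lf lam i"
  using assms part_nth_mono[OF assms] by (auto simp: Lf_def)

lemma Lf_pos: "is_partition lam \<Longrightarrow> r < length lam \<Longrightarrow> 0 < Lf lam r"
  by (auto simp: Lf_def is_partition_def)

lemma Cf_card: "Cf lam c = card {i. i < length lam \<and> c < lam ! i}"
  by (simp add: Cf_def length_filter_conv_card Suc_le_eq)

lemma Cf_iff:
  assumes P: "is_partition lam"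
  shows "r < Cf lam c \<longleftrightarrow> c < Lf lam r"
proof
  assume c: "c < Lf lam r"
  then have rl: "r < length lam" by (auto simp: Lf_def split: if_splits)
  have "{..r} \<subseteq> {i. i < length lam \<and> c < lam ! i}"
  proof
    fix i assume "i \<in> {..r}"
    then have "i \<le> r" by simp
    with Lf_mono[OF P this] c rl show "i \<in> {i. i < length lam \<and> c < lam ! i}"
      by (auto simp: Lf_def)
  qed
  then have "card {..r} \<le> Cf lam c" unfolding Cf_card by (intro card_mono) auto
  then show "r < Cf lam c" by simp
next
  assume r: "r < Cf lam c"
  show "c < Lf lam r"
  proof (rule ccontr)
    assume "\<not> c < Lf lam r"
    then have "{i. i < length lam \<and> c < lam ! i} \<subseteq> {..<r}"
    proof (intro subsetI)
      fix i assume i: "i \<in> {i. i < length lam \<and> c < lam ! i}" and n: "\<not> c < Lf lam r"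
      show "i \<in> {..<r}"
      proof (rule ccontr)
        assume "i \<notin> {..<r}"
        then have "r \<le> i" by simp
        from Lf_mono[OF P this] i n show False by (auto simp: Lf_def)
      qed
    qed
    then have "Cf lam c \<le> r" unfolding Cf_card using card_mono[of "{..<r}"] by fastforce
    with r show False by simp
  qed
qed

lemma foldr_max_le: "(\<forall>y\<in>set xs. y \<le> x) \<Longrightarrow> foldr max xs 0 \<le> (x::nat)"
  by (induction xs) auto

lemma foldr_max_part: "is_partition lam \<Longrightarrow> foldr max lam 0 = Lf lam 0"
proof (cases lam)
  case (Cons x xs)
  assume "is_partition lam"
  then have "\<forall>y\<in>set xs. y \<le> x" using Cons by (auto simp: is_partition_def)
  then have "foldr max xs 0 \<le> x" by (rule foldr_max_le)
  then show ?thesis using Cons by (simp add: Lf_def)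
qed (simp add: Lf_def)

lemma selfconj_len:
  assumes "is_partition lam" "self_conj lam"
  shows "length lam = Lf lam 0"
proof -
  have "length (conj_part lam) = foldr max lam 0" by (simp add: conj_part_def)
  then show ?thesis using assms foldr_max_part by (simp add: self_conj_def)
qed

lemma selfconj_Cf:
  assumes P: "is_partition lam" and S: "self_conj lam"
  shows "Cf lam c = Lf lam c"
proof (cases "c < length lam")
  case True
  have "c < foldr max lam 0" using True selfconj_len[OF P S] foldr_max_part[OF P] by simp
  then have "conj_part lam ! c = Cf lam c"
    unfolding conj_part_def Cf_def by (subst nth_map) (auto simp del: upt_Suc)
  then show ?thesis using S True by (simp add: self_conj_def Lf_def)
next
  case False
  have "\<not> 0 < Cf lam c" using Cf_iff[OF P, of 0 c] False selfconj_len[OF P S] by simp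
  then show ?thesis using False by (simp add: Lf_def)
qed

lemma pf_strict:
  assumes "is_partition lam" "r < s" shows "pf lam s < pf lam r"
  using Lf_mono[OF assms(1), of r s] assms(2) by (simp add: pf_def)

lemma pf_inj: "is_partition lam \<Longrightarrow> inj (pf lam)"
  by (metis linorder_inj_onI' pf_strict less_irrefl UNIV_I)

lemma pf_pair:
  assumes P: "is_partition lam" and S: "self_conj lam"
  shows "c < Lf lam r \<Longrightarrow> pf lam r + pf lam c + 1 \<ge> 1"
    and "\<not> c < Lf lam r \<Longrightarrow> pf lam r + pf lam c + 1 \<le> -1"
proof -
  have iff: "r < Lf lam c \<longleftrightarrow> c < Lf lam r" using Cf_iff[OF P] selfconj_Cf[OF P S] by metis
  show "c < Lf lam r \<Longrightarrow> pf lam r + pf lam c + 1 \<ge> 1" using iff by (simp add: pf_def)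
  show "\<not> c < Lf lam r \<Longrightarrow> pf lam r + pf lam c + 1 \<le> -1" using iff by (simp add: pf_def)
qed

lemma pf_ne: "is_partition lam \<Longrightarrow> self_conj lam \<Longrightarrow> pf lam r + pf lam c + 1 \<noteq> 0"
  using pf_pair by (metis add.commute add_le_same_cancel1 not_less_iff_gr_or_eq zero_less_one
      one_le_numeral le_less_trans not_one_le_zero linorder_not_less neg_0_le_iff_le
      dual_order.trans zero_le_one)


definition PD :: "nat set \<Rightarrow> int set" where
  "PD D = {z. (0 \<le> z \<and> nat z \<in> D) \<or> (z < 0 \<and> nat (-1 - z) \<notin> D)}"
definition Dset :: "nat list \<Rightarrow> nat set" where
  "Dset lam = {n. int n \<in> range (pf lam)}"

lemma pf_bounds:
  assumes P: "is_partition lam" and S: "self_conj lam"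
  shows "pf lam r \<le> int (length lam) - 1" "- int r - 1 \<le> pf lam r"
proof -
  have "Lf lam r \<le> Lf lam 0" by (rule Lf_mono[OF P]) simp
  then show "pf lam r \<le> int (length lam) - 1" using selfconj_len[OF P S] by (simp add: pf_def)
  show "- int r - 1 \<le> pf lam r" by (simp add: pf_def)
qed

lemma pf_cover:
  assumes P: "is_partition lam" and S: "self_conj lam"
  shows "z \<in> range (pf lam) \<or> -1 - z \<in> range (pf lam)"
proof -
  define K where "K = length lam + nat \<bar>z\<bar> + 1"
  define A where "A = pf lam ` {..<K}"
  define B where "B = (\<lambda>c. -1 - pf lam c) ` {..<K}"
  define I where "I = {- int K..<int K}"
  have inj: "inj (pf lam)" by (rule pf_inj[OF P])
  have cA: "card A = K" unfolding A_def using inj by (simp add: card_image inj_on_subset)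
  have injB: "inj (\<lambda>c. -1 - pf lam c)" using inj by (auto simp: inj_def)
  have cB: "card B = K" unfolding B_def using injB by (simp add: card_image inj_on_subset)
  have disj: "A \<inter> B = {}"
  proof -
    { fix x assume xA: "x \<in> A" and xB: "x \<in> B"
      from xA obtain r where r: "x = pf lam r" unfolding A_def by auto
      from xB obtain c where c: "x = -1 - pf lam c" unfolding B_def by auto
      from r c have "pf lam r + pf lam c + 1 = 0" by simp
      with pf_ne[OF P S] have False by blast }
    then show ?thesis by blast
  qed
  have sub: "A \<union> B \<subseteq> I"
  proof -
    { fix r assume r: "r < K"
      have "pf lam r \<in> I" "-1 - pf lam r \<in> I"
        using pf_bounds[OF P S, of r] r unfolding I_def K_def by auto }
    then show ?thesis unfolding A_def B_def by auto
  qed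
  have fin: "finite A" "finite B" unfolding A_def B_def by auto
  have "card (A \<union> B) = 2 * K" using card_Un_disjoint[OF fin disj] cA cB by simp
  moreover have "card I = 2 * K" unfolding I_def by simp
  ultimately have "A \<union> B = I" using sub by (intro card_subset_eq) (auto simp: I_def)
  moreover have "z \<in> I" unfolding I_def K_def by auto
  ultimately have "z \<in> A \<or> z \<in> B" by blast
  then show ?thesis
  proof
    assume "z \<in> A" then show ?thesis unfolding A_def by auto
  next
    assume "z \<in> B" then obtain c where "z = -1 - pf lam c" unfolding B_def by auto
    then have "-1 - z = pf lam c" by simp
    then show ?thesis by (metis rangeI)
  qed
qed

lemma pf_anti:
  assumes P: "is_partition lam" and S: "self_conj lam"
  shows "z \<in> range (pf lam) \<longleftrightarrow> -1 - z \<notin> range (pf lam)"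
proof -
  have "\<not> (z \<in> range (pf lam) \<and> -1 - z \<in> range (pf lam))"
  proof
    assume zz: "z \<in> range (pf lam) \<and> -1 - z \<in> range (pf lam)"
    then obtain r where r: "z = pf lam r" by auto
    from zz obtain c where c: "-1 - z = pf lam c" by auto
    from r c have "pf lam r + pf lam c + 1 = 0" by simp
    with pf_ne[OF P S] show False by blast
  qed
  with pf_cover[OF P S, of z] show ?thesis by blast
qed

lemma range_pf_PD:
  assumes P: "is_partition lam" and S: "self_conj lam"
  shows "range (pf lam) = PD (Dset lam)"
proof (intro set_eqI)
  fix z
  show "z \<in> range (pf lam) \<longleftrightarrow> z \<in> PD (Dset lam)"
  proof (cases "0 \<le> z")
    case True
    then show ?thesis by (simp add: PD_def Dset_def)
  next
    case False
    have "z \<in> range (pf lam) \<longleftrightarrow> -1 - z \<notin> range (pf lam)" by (rule pf_anti[OF P S])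
    moreover have "int (nat (-1 - z)) = -1 - z" using False by simp
    ultimately show ?thesis using False unfolding PD_def Dset_def by auto
  qed
qed

lemma hook_cell:
  assumes P: "is_partition lam" and S: "self_conj lam" and c: "c < Lf lam r"
  shows "int (hook lam (Suc r) (Suc c)) = pf lam r + pf lam c + 1"
proof -
  have r: "r < Lf lam c" using Cf_iff[OF P] selfconj_Cf[OF P S] c by metis
  then have cl: "c < length lam" by (auto simp: Lf_def split: if_splits)
  have rl: "r < length lam" using c by (auto simp: Lf_def split: if_splits)
  have "conj_part lam ! c = lam ! c" using S by (simp add: self_conj_def)
  then show ?thesis using c r cl rl by (simp add: hook_def pf_def Lf_def)
qed

lemma n_hook_pairs:
  assumes P: "is_partition lam" and S: "self_conj lam" and t: "0 < t"
  shows "n_hook t lam = card {(r, c). pf lam r + pf lam c + 1 = int t}"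
proof -
  let ?g = "\<lambda>(r, c). (Suc r, Suc c)"
  have eq: "{x \<in> cells lam. hook lam (fst x) (snd x) = t} = ?g ` {(r, c). pf lam r + pf lam c + 1 = int t}"
  proof (intro set_eqI iffI)
    fix x assume x: "x \<in> {x \<in> cells lam. hook lam (fst x) (snd x) = t}"
    then obtain i j where ij: "x = (i, j)" "1 \<le> i" "i \<le> length lam" "1 \<le> j" "j \<le> lam ! (i - 1)"
      "hook lam i j = t" by (auto simp: cells_def)
    define r c where "r = i - 1" "c = j - 1"
    have ij2: "i = Suc r" "j = Suc c" using ij r_c_def by auto
    have "c < Lf lam r" using ij ij2 by (simp add: Lf_def)
    from hook_cell[OF P S this] ij ij2 have "pf lam r + pf lam c + 1 = int t" by simp
    then show "x \<in> ?g ` {(r, c). pf lam r + pf lam c + 1 = int t}" using ij ij2 by auto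
  next
    fix x assume "x \<in> ?g ` {(r, c). pf lam r + pf lam c + 1 = int t}"
    then obtain r c where rc: "x = (Suc r, Suc c)" "pf lam r + pf lam c + 1 = int t" by auto
    have "c < Lf lam r"
    proof (rule ccontr)
      assume "\<not> c < Lf lam r"
      from pf_pair(2)[OF P S this] rc t show False by simp
    qed
    moreover from hook_cell[OF P S this] rc have "hook lam (Suc r) (Suc c) = t" by simp
    ultimately show "x \<in> {x \<in> cells lam. hook lam (fst x) (snd x) = t}"
      using rc by (auto simp: cells_def Lf_def split: if_splits)
  qed
  have "inj_on ?g {(r, c). pf lam r + pf lam c + 1 = int t}" by (auto simp: inj_on_def)
  then have "card (?g ` {(r, c). pf lam r + pf lam c + 1 = int t}) = card {(r, c). pf lam r + pf lam c + 1 = int t}"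
    by (rule card_image)
  then show ?thesis unfolding n_hook_def eq .
qed

lemma pairs_card:
  assumes P: "is_partition lam"
  shows "card {(r, c). pf lam r + pf lam c + 1 = T} = card {x \<in> range (pf lam). T - 1 - x \<in> range (pf lam)}"
proof -
  have inj: "inj (pf lam)" by (rule pf_inj[OF P])
  let ?h = "\<lambda>(r, c). pf lam r"
  have ih: "inj_on ?h {(r, c). pf lam r + pf lam c + 1 = T}"
  proof (rule inj_onI)
    fix x y assume xy: "x \<in> {(r, c). pf lam r + pf lam c + 1 = T}" "y \<in> {(r, c). pf lam r + pf lam c + 1 = T}" "?h x = ?h y"
    obtain r c where x: "x = (r, c)" by (cases x)
    obtain r' c' where y: "y = (r', c')" by (cases y)
    have "pf lam r + pf lam c + 1 = T" "pf lam r' + pf lam c' + 1 = T" "pf lam r = pf lam r'"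
      using xy x y by auto
    then have rr: "r = r'" and "pf lam c = pf lam c'" using injD[OF inj] by auto
    then have "c = c'" using injD[OF inj] by blast
    then show "x = y" using rr x y by simp
  qed
  have im: "?h ` {(r, c). pf lam r + pf lam c + 1 = T} = {x \<in> range (pf lam). T - 1 - x \<in> range (pf lam)}"
  proof (intro set_eqI iffI)
    fix x assume xx: "x \<in> {x \<in> range (pf lam). T - 1 - x \<in> range (pf lam)}"
    then obtain r where r: "x = pf lam r" by auto
    from xx obtain c where c: "T - 1 - x = pf lam c" by auto
    from r c show "x \<in> ?h ` {(r, c). pf lam r + pf lam c + 1 = T}"
      by (intro image_eqI[of _ _ "(r, c)"]) auto
  next
    fix x assume "x \<in> ?h ` {(r, c). pf lam r + pf lam c + 1 = T}"
    then obtain y where y: "y \<in> {(r, c). pf lam r + pf lam c + 1 = T}" "x = ?h y" by (rule imageE)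
    obtain r c where "y = (r, c)" by (cases y)
    with y have "x = pf lam r" "pf lam r + pf lam c + 1 = T" by auto
    then have "x = pf lam r" "T - 1 - x = pf lam c" by auto
    then show "x \<in> {x \<in> range (pf lam). T - 1 - x \<in> range (pf lam)}" by auto
  qed
  show ?thesis using card_image[OF ih] unfolding im by (rule sym)
qed

theorem n_hook_PD:
  assumes P: "is_partition lam" and S: "self_conj lam" and t: "0 < t"
  shows "n_hook t lam = card {x \<in> PD (Dset lam). int t - 1 - x \<in> PD (Dset lam)}"
proof -
  have h: "n_hook t lam = card {x \<in> range (pf lam). int t - 1 - x \<in> range (pf lam)}"
    using trans[OF n_hook_pairs[OF P S t] pairs_card[OF P, of "int t"]] .
  show ?thesis
    using trans[OF h arg_cong[OF range_pf_PD[OF P S], of "\<lambda>R. card {x \<in> R. int t - 1 - x \<in> R}"]] by simp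
qed


definition wt :: "nat set \<Rightarrow> nat" where "wt D = (\<Sum>d\<in>D. 2 * d + 1)"
definition DS :: "nat \<Rightarrow> nat set set" where "DS n = {D. finite D \<and> wt D = n}"
definition alphaD :: "nat \<Rightarrow> nat set \<Rightarrow> nat" where
  "alphaD t D = card {d\<in>D. t \<le> d \<and> d - t \<notin> D}"
definition X2 :: "nat \<Rightarrow> nat set \<Rightarrow> nat" where
  "X2 t D = card {d\<in>D. d < t \<and> t - 1 - d \<in> D}"
definition betaD :: "nat \<Rightarrow> nat set \<Rightarrow> nat" where
  "betaD t D = card {d\<in>D. d < (t - 1) div 2 \<and> t - 1 - d \<in> D}"
definition gammaD :: "nat \<Rightarrow> nat set \<Rightarrow> nat" where
  "gammaD t D = card {d\<in>D. d + t \<notin> D}"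
definition deltaD :: "nat \<Rightarrow> nat set \<Rightarrow> nat" where
  "deltaD t D = card {d. d < (t - 1) div 2 \<and> d \<notin> D \<and> t - 1 - d \<notin> D}"

lemma hookD:
  assumes fin: "finite D" and t: "0 < t"
  shows "card {x \<in> PD D. int t - 1 - x \<in> PD D} = 2 * alphaD t D + X2 t D"
proof -
  define A1 where "A1 = {d\<in>D. t \<le> d \<and> d - t \<notin> D}"
  define A2 where "A2 = {d\<in>D. d < t \<and> t - 1 - d \<in> D}"
  define A3 where "A3 = {e. e \<notin> D \<and> e + t \<in> D}"
  define U where "U = int ` A1 \<union> int ` A2 \<union> (\<lambda>e. -1 - int e) ` A3"
  have eq: "{x \<in> PD D. int t - 1 - x \<in> PD D} = U"
  proof (intro set_eqI iffI)
    fix x assume x: "x \<in> {x \<in> PD D. int t - 1 - x \<in> PD D}"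
    show "x \<in> U"
    proof (cases "0 \<le> x")
      case True
      define d where "d = nat x"
      have xd: "x = int d" using True d_def by simp
      have dD: "d \<in> D" using x True d_def by (simp add: PD_def)
      show ?thesis
      proof (cases "t \<le> d")
        case True
        have "nat (-1 - (int t - 1 - x)) = d - t" using True xd by simp
        then have "d - t \<notin> D" using x True xd by (simp add: PD_def)
        then have "d \<in> A1" using dD True A1_def by simp
        then show ?thesis using xd U_def by blast
      next
        case False
        have "nat (int t - 1 - x) = t - 1 - d" using False xd by simp
        then have "t - 1 - d \<in> D" using x False xd by (simp add: PD_def)
        then have "d \<in> A2" using dD False A2_def by simp
        then show ?thesis using xd U_def by blast
      qed
    next
      case False
      define e where "e = nat (-1 - x)"
      have xe: "x = -1 - int e" using False e_def by simp
      have eD: "e \<notin> D" using x False e_def by (simp add: PD_def)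
      have "nat (int t - 1 - x) = e + t" using xe by simp
      then have "e + t \<in> D" using x xe by (simp add: PD_def)
      then have "e \<in> A3" using eD A3_def by simp
      then show ?thesis using xe U_def by blast
    qed
  next
    fix x assume "x \<in> U"
    then consider (a) d where "d \<in> A1" "x = int d" | (b) d where "d \<in> A2" "x = int d"
      | (c) e where "e \<in> A3" "x = -1 - int e" unfolding U_def by blast
    then show "x \<in> {x \<in> PD D. int t - 1 - x \<in> PD D}"
    proof cases
      case a
      have "nat (-1 - (int t - 1 - x)) = d - t" using a A1_def by simp
      then show ?thesis using a A1_def by (simp add: PD_def)
    next
      case b
      have "nat (int t - 1 - x) = t - 1 - d" using b A2_def by simp
      then show ?thesis using b A2_def by (simp add: PD_def)
    next
      case c
      have "nat (int t - 1 - x) = e + t" using c by simp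
      moreover have "nat (-1 - x) = e" using c by simp
      ultimately show ?thesis using c A3_def by (simp add: PD_def)
    qed
  qed
  have fA1: "finite A1" "finite A2" unfolding A1_def A2_def using fin by auto
  have A3im: "A3 = (\<lambda>d. d - t) ` A1"
  proof (intro set_eqI iffI)
    fix e assume "e \<in> A3" then show "e \<in> (\<lambda>d. d - t) ` A1"
      unfolding A3_def A1_def by (intro image_eqI[of _ _ "e + t"]) auto
  qed (auto simp: A3_def A1_def)
  have injA1: "inj_on (\<lambda>d. d - t) A1" unfolding A1_def by (auto simp: inj_on_def)
  have cA3: "card A3 = card A1" using A3im card_image[OF injA1] by simp
  have fA3: "finite A3" using A3im fA1 by simp
  have d12: "int ` A1 \<inter> int ` A2 = {}" unfolding A1_def A2_def by auto
  have d3: "(int ` A1 \<union> int ` A2) \<inter> (\<lambda>e. -1 - int e) ` A3 = {}" by auto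
  have "card U = card (int ` A1) + card (int ` A2) + card ((\<lambda>e. -1 - int e) ` A3)"
    unfolding U_def using fA1 fA3 d12 d3 by (simp add: card_Un_disjoint)
  also have "\<dots> = card A1 + card A2 + card A3"
    by (simp add: card_image inj_on_def)
  finally show ?thesis unfolding eq using cA3 by (simp add: alphaD_def X2_def A1_def A2_def)
qed


lemma card_split: "finite A \<Longrightarrow> card A = card {x\<in>A. P x} + card {x\<in>A. \<not> P x}"
  using card_Int_Diff[of A "{x. P x}"] by (simp add: set_diff_eq Int_def)

lemma card_bool: "card {d. d < (c::nat) \<and> P d} = (\<Sum>d<c. of_bool (P d))"
proof -
  have "{d. d < c \<and> P d} = {..<c} \<inter> {x. P x}" by auto
  then show ?thesis by simp
qed

lemma X2_split:
  assumes t: "odd t" and fin: "finite D"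
  shows "X2 t D = of_bool ((t - 1) div 2 \<in> D) + 2 * betaD t D"
proof -
  define c where "c = (t - 1) div 2"
  have tc: "t = 2 * c + 1" using t unfolding c_def by (auto elim!: oddE)
  define B1 where "B1 = {d\<in>D. d < c \<and> t - 1 - d \<in> D}"
  define B2 where "B2 = {d\<in>D. c < d \<and> d < t \<and> t - 1 - d \<in> D}"
  define Cs where "Cs = {d\<in>D. d = c}"
  have eq: "{d\<in>D. d < t \<and> t - 1 - d \<in> D} = B1 \<union> Cs \<union> B2"
    unfolding B1_def B2_def Cs_def using tc by auto
  have B2im: "B2 = (\<lambda>d. t - 1 - d) ` B1"
  proof (intro set_eqI iffI)
    fix x assume "x \<in> B2" then show "x \<in> (\<lambda>d. t - 1 - d) ` B1"
      unfolding B1_def B2_def using tc by (intro image_eqI[of _ _ "t - 1 - x"]) auto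
  qed (auto simp: B1_def B2_def tc)
  have inj: "inj_on (\<lambda>d. t - 1 - d) B1" unfolding B1_def using tc by (auto simp: inj_on_def)
  have fin1: "finite B1" "finite B2" "finite Cs" unfolding B1_def B2_def Cs_def using fin by auto
  have "card (B1 \<union> Cs \<union> B2) = card B1 + card Cs + card B2"
    using fin1 by (subst card_Un_disjoint; auto simp: B1_def B2_def Cs_def card_Un_disjoint)+
  moreover have "card B2 = card B1" using B2im card_image[OF inj] by simp
  moreover have "card Cs = of_bool (c \<in> D)"
  proof (cases "c \<in> D")
    case True then have "Cs = {c}" unfolding Cs_def by auto
    then show ?thesis using True by simp
  next
    case False then have "Cs = {}" unfolding Cs_def by auto
    then show ?thesis using False by simp
  qed
  ultimately show ?thesis unfolding X2_def betaD_def eq using c_def B1_def by simp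
qed

lemma gamma_alpha:
  assumes fin: "finite D" and t: "0 < t"
  shows "gammaD t D = alphaD t D + card {d\<in>D. d < t}"
proof -
  have e1: "card D = card {d\<in>D. d + t \<in> D} + gammaD t D"
    unfolding gammaD_def by (rule card_split[OF fin])
  have e2: "card D = card {d\<in>D. d < t} + card {d\<in>D. \<not> d < t}"
    by (rule card_split[OF fin])
  have fin2: "finite {d\<in>D. \<not> d < t}" using fin by simp
  have e3: "card {d\<in>D. \<not> d < t} = card {d\<in>D. \<not> d < t \<and> d - t \<in> D} + alphaD t D"
  proof -
    have "card {d\<in>D. \<not> d < t} = card {d\<in>{d\<in>D. \<not> d < t}. d - t \<in> D} + card {d\<in>{d\<in>D. \<not> d < t}. d - t \<notin> D}"
      by (rule card_split[OF fin2])
    moreover have "{d\<in>{d\<in>D. \<not> d < t}. d - t \<in> D} = {d\<in>D. \<not> d < t \<and> d - t \<in> D}" by auto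
    moreover have "{d\<in>{d\<in>D. \<not> d < t}. d - t \<notin> D} = {d\<in>D. t \<le> d \<and> d - t \<notin> D}" by auto
    ultimately show ?thesis unfolding alphaD_def by simp
  qed
  have im: "{d\<in>D. \<not> d < t \<and> d - t \<in> D} = (\<lambda>d. d + t) ` {d\<in>D. d + t \<in> D}"
  proof (intro set_eqI iffI)
    fix x assume "x \<in> {d\<in>D. \<not> d < t \<and> d - t \<in> D}"
    then show "x \<in> (\<lambda>d. d + t) ` {d\<in>D. d + t \<in> D}" by (intro image_eqI[of _ _ "x - t"]) auto
  qed auto
  have "card {d\<in>D. \<not> d < t \<and> d - t \<in> D} = card {d\<in>D. d + t \<in> D}"
    unfolding im by (simp add: card_image)
  then show ?thesis using e1 e2 e3 by simp
qed

lemma F2: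
  assumes t: "odd t" and fin: "finite D"
  shows "gammaD t D + deltaD t D = alphaD t D + betaD t D + (t - 1) div 2 + of_bool ((t - 1) div 2 \<in> D)"
proof -
  define c where "c = (t - 1) div 2"
  have tc: "t = 2 * c + 1" using t unfolding c_def by (auto elim!: oddE)
  have g: "gammaD t D = alphaD t D + card {d\<in>D. d < t}" using gamma_alpha[OF fin] tc by simp
  have s1: "card {d\<in>D. d < t} = of_bool (c \<in> D) + card {d. d < c \<and> d \<in> D} + card {d. d < c \<and> t - 1 - d \<in> D}"
  proof -
    define B1 where "B1 = {d. d < c \<and> d \<in> D}"
    define B2 where "B2 = {d\<in>D. c < d \<and> d < t}"
    define Cs where "Cs = {d\<in>D. d = c}"
    have eq: "{d\<in>D. d < t} = B1 \<union> Cs \<union> B2"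
      unfolding B1_def B2_def Cs_def using tc by auto
    have B2im: "B2 = (\<lambda>d. t - 1 - d) ` {d. d < c \<and> t - 1 - d \<in> D}"
    proof (intro set_eqI iffI)
      fix x assume "x \<in> B2" then show "x \<in> (\<lambda>d. t - 1 - d) ` {d. d < c \<and> t - 1 - d \<in> D}"
        unfolding B2_def using tc by (intro image_eqI[of _ _ "t - 1 - x"]) auto
    qed (auto simp: B2_def tc)
    have inj: "inj_on (\<lambda>d. t - 1 - d) {d. d < c \<and> t - 1 - d \<in> D}" using tc by (auto simp: inj_on_def)
    have fin1: "finite B1" "finite B2" "finite Cs" unfolding B1_def B2_def Cs_def using fin by auto
    have "card (B1 \<union> Cs \<union> B2) = card B1 + card Cs + card B2"
      using fin1 by (subst card_Un_disjoint; auto simp: B1_def B2_def Cs_def card_Un_disjoint)+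
    moreover have "card B2 = card {d. d < c \<and> t - 1 - d \<in> D}" using B2im card_image[OF inj] by simp
    moreover have "card Cs = of_bool (c \<in> D)"
    proof (cases "c \<in> D")
      case True then have "Cs = {c}" unfolding Cs_def by auto
      then show ?thesis using True by simp
    next
      case False then have "Cs = {}" unfolding Cs_def by auto
      then show ?thesis using False by simp
    qed
    ultimately show ?thesis unfolding eq B1_def by simp
  qed
  have s2: "deltaD t D + card {d. d < c \<and> d \<in> D} + card {d. d < c \<and> t - 1 - d \<in> D}
      = c + betaD t D"
  proof -
    have b: "betaD t D = card {d. d < c \<and> (d \<in> D \<and> t - 1 - d \<in> D)}"
      unfolding betaD_def c_def by (rule arg_cong[where f=card]) auto
    have "deltaD t D + card {d. d < c \<and> d \<in> D} + card {d. d < c \<and> t - 1 - d \<in> D}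
       = (\<Sum>d<c. of_bool (d \<notin> D \<and> t - 1 - d \<notin> D) + of_bool (d \<in> D) + of_bool (t - 1 - d \<in> D))"
      unfolding deltaD_def c_def[symmetric] card_bool by (simp add: sum.distrib)
    also have "\<dots> = (\<Sum>d<c. 1 + of_bool (d \<in> D \<and> t - 1 - d \<in> D))"
      by (rule sum.cong) auto
    also have "\<dots> = c + betaD t D" unfolding b card_bool by (simp only: sum.distrib) simp
    finally show ?thesis .
  qed
  show ?thesis using g s1 s2 c_def by simp
qed


lemma wt_insert: "finite D \<Longrightarrow> d \<notin> D \<Longrightarrow> wt (insert d D) = wt D + (2 * d + 1)"
  by (simp add: wt_def)

lemma wt_remove: "finite D \<Longrightarrow> d \<in> D \<Longrightarrow> wt D = wt (D - {d}) + (2 * d + 1)"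
  unfolding wt_def by (simp add: sum.remove)

lemma wt_ge: "finite D \<Longrightarrow> d \<in> D \<Longrightarrow> 2 * d + 1 \<le> wt D"
  using wt_remove by fastforce

lemma DS_sub: "DS n \<subseteq> Pow {..<n}"
proof
  fix D assume "D \<in> DS n"
  then have "finite D" "wt D = n" by (auto simp: DS_def)
  then show "D \<in> Pow {..<n}" using wt_ge by fastforce
qed

lemma DS_fin: "finite (DS n)"
  using DS_sub finite_subset by blast

lemma oddt: "odd (t::nat) \<Longrightarrow> t = 2 * ((t - 1) div 2) + 1"
  by (auto elim!: oddE)

lemma central:
  assumes t: "odd t" and n: "t \<le> n"
  shows "card {D\<in>DS n. (t - 1) div 2 \<in> D} = card {D\<in>DS (n - t). (t - 1) div 2 \<notin> D}"
proof -
  define c where "c = (t - 1) div 2"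
  have tc: "2 * c + 1 = t" using oddt[OF t] c_def by simp
  have "bij_betw (\<lambda>D. D - {c}) {D\<in>DS n. c \<in> D} {D\<in>DS (n - t). c \<notin> D}"
  proof (rule bij_betw_byWitness[where f' = "insert c"])
    show "\<forall>a\<in>{D \<in> DS n. c \<in> D}. insert c (a - {c}) = a" by auto
    show "\<forall>a\<in>{D \<in> DS (n - t). c \<notin> D}. insert c a - {c} = a" by auto
    show "(\<lambda>D. D - {c}) ` {D \<in> DS n. c \<in> D} \<subseteq> {D \<in> DS (n - t). c \<notin> D}"
    proof clarify
      fix D assume "D \<in> DS n" "c \<in> D"
      then have "finite D" "wt D = n" "c \<in> D" by (auto simp: DS_def)
      then have "wt (D - {c}) = n - t" using wt_remove[of D c] tc by simp
      then show "D - {c} \<in> DS (n - t) \<and> c \<notin> D - {c}" using \<open>finite D\<close> by (simp add: DS_def)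
    qed
    show "insert c ` {D \<in> DS (n - t). c \<notin> D} \<subseteq> {D \<in> DS n. c \<in> D}"
    proof clarify
      fix D assume "D \<in> DS (n - t)" "c \<notin> D"
      then have "finite D" "wt D = n - t" "c \<notin> D" by (auto simp: DS_def)
      then have "wt (insert c D) = n" using wt_insert[of D c] tc n by simp
      then show "insert c D \<in> DS n \<and> c \<in> insert c D" using \<open>finite D\<close> by (simp add: DS_def)
    qed
  qed
  then show ?thesis using c_def bij_betw_same_card by blast
qed

lemma central0:
  assumes t: "odd t" and n: "n < t"
  shows "{D\<in>DS n. (t - 1) div 2 \<in> D} = {}"
proof -
  { fix D assume "D \<in> DS n" "(t - 1) div 2 \<in> D"
    then have "2 * ((t - 1) div 2) + 1 \<le> n" using wt_ge by (auto simp: DS_def)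
    with oddt[OF t] n have False by simp }
  then show ?thesis by blast
qed

lemma sum_card_Sigma:
  "(\<Sum>D\<in>DS n. card (B D)) = card (SIGMA D:DS n. B D)" if "\<And>D. finite D \<Longrightarrow> finite (B D)"
proof -
  have "finite (DS n)" by (rule DS_fin)
  then show ?thesis using that by (subst card_SigmaI) (auto simp: DS_def)
qed

lemma alpha_bij:
  assumes t: "0 < t" and n: "2 * t \<le> n"
  shows "(\<Sum>D\<in>DS n. alphaD t D) = (\<Sum>D\<in>DS (n - 2 * t). gammaD t D)"
proof -
  define A where "A = (SIGMA D:DS n. {d\<in>D. t \<le> d \<and> d - t \<notin> D})"
  define B where "B = (SIGMA D:DS (n - 2 * t). {d\<in>D. d + t \<notin> D})"
  define f where "f = (\<lambda>(D, d). (insert (d - t) (D - {d}), d - t))"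
  define g where "g = (\<lambda>(D, e). (insert (e + t) (D - {e}), e + t))"
  have "bij_betw f A B"
  proof (rule bij_betw_byWitness[where f' = g])
    show "\<forall>a\<in>A. g (f a) = a"
    proof
      fix a assume "a \<in> A"
      then obtain D d where a: "a = (D, d)" "d \<in> D" "t \<le> d" "d - t \<notin> D" unfolding A_def by auto
      have "insert (d - t) (D - {d}) - {d - t} = D - {d}" using a by auto
      then show "g (f a) = a" using a unfolding f_def g_def by auto
    qed
    show "\<forall>a\<in>B. f (g a) = a"
    proof
      fix a assume "a \<in> B"
      then obtain D e where a: "a = (D, e)" "e \<in> D" "e + t \<notin> D" unfolding B_def by auto
      have "insert (e + t) (D - {e}) - {e + t} = D - {e}" using a by auto
      then show "f (g a) = a" using a unfolding f_def g_def by auto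
    qed
    show "f ` A \<subseteq> B"
    proof
      fix b assume "b \<in> f ` A"
      then obtain D d where a: "b = f (D, d)" "D \<in> DS n" "d \<in> D" "t \<le> d" "d - t \<notin> D" unfolding A_def by auto
      have fD: "finite D" "wt D = n" using a by (auto simp: DS_def)
      have w1: "wt D = wt (D - {d}) + (2 * d + 1)" using wt_remove fD a by blast
      have w2: "wt (insert (d - t) (D - {d})) = wt (D - {d}) + (2 * (d - t) + 1)"
        using wt_insert[of "D - {d}" "d - t"] fD a by simp
      have "wt (insert (d - t) (D - {d})) = n - 2 * t" using w1 w2 fD a by simp
      moreover have "d - t + t \<notin> insert (d - t) (D - {d})" using a t by auto
      ultimately show "b \<in> B" using a fD unfolding B_def f_def by (simp add: DS_def)
    qed
    show "g ` B \<subseteq> A"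
    proof
      fix b assume "b \<in> g ` B"
      then obtain D e where a: "b = g (D, e)" "D \<in> DS (n - 2 * t)" "e \<in> D" "e + t \<notin> D" unfolding B_def by auto
      have fD: "finite D" "wt D = n - 2 * t" using a by (auto simp: DS_def)
      have w1: "wt D = wt (D - {e}) + (2 * e + 1)" using wt_remove fD a by blast
      have w2: "wt (insert (e + t) (D - {e})) = wt (D - {e}) + (2 * (e + t) + 1)"
        using wt_insert[of "D - {e}" "e + t"] fD a by simp
      have "wt (insert (e + t) (D - {e})) = n" using w1 w2 fD a n by simp
      moreover have "e + t - t \<notin> insert (e + t) (D - {e})" using a t by auto
      ultimately show "b \<in> A" using a fD unfolding A_def g_def by (simp add: DS_def)
    qed
  qed
  then have "card A = card B" by (rule bij_betw_same_card)
  then show ?thesis unfolding A_def B_def alphaD_def gammaD_def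
    by (subst (1 2) sum_card_Sigma) auto
qed

lemma alpha0:
  assumes n: "n < 2 * t" and D: "D \<in> DS n"
  shows "alphaD t D = 0"
proof -
  have fD: "finite D" "wt D = n" using D by (auto simp: DS_def)
  have "{d\<in>D. t \<le> d \<and> d - t \<notin> D} = {}"
  proof (rule ccontr)
    assume "{d\<in>D. t \<le> d \<and> d - t \<notin> D} \<noteq> {}"
    then obtain d where d: "d \<in> D" "t \<le> d" by auto
    have "2 * d + 1 \<le> n" using wt_ge[OF fD(1) d(1)] fD by simp
    then show False using d n by simp
  qed
  then show ?thesis unfolding alphaD_def by (metis card.empty)
qed

lemma beta_bij:
  assumes t: "odd t" and n: "2 * t \<le> n"
  shows "(\<Sum>D\<in>DS n. betaD t D) = (\<Sum>D\<in>DS (n - 2 * t). deltaD t D)"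
proof -
  define c where "c = (t - 1) div 2"
  have tc: "t = 2 * c + 1" using oddt[OF t] c_def by simp
  define A where "A = (SIGMA D:DS n. {d\<in>D. d < c \<and> t - 1 - d \<in> D})"
  define B where "B = (SIGMA D:DS (n - 2 * t). {d. d < c \<and> d \<notin> D \<and> t - 1 - d \<notin> D})"
  define f where "f = (\<lambda>(D, d). (D - {d, t - 1 - d}, d))"
  define g where "g = (\<lambda>(D, e). (insert e (insert (t - 1 - e) D), e))"
  have "bij_betw f A B"
  proof (rule bij_betw_byWitness[where f' = g])
    show "\<forall>a\<in>A. g (f a) = a"
    proof
      fix a assume "a \<in> A"
      then obtain D d where a: "a = (D, d)" "d \<in> D" "t - 1 - d \<in> D" unfolding A_def by auto
      then show "g (f a) = a" unfolding f_def g_def by auto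
    qed
    show "\<forall>a\<in>B. f (g a) = a"
    proof
      fix a assume "a \<in> B"
      then obtain D e where a: "a = (D, e)" "e < c" "e \<notin> D" "t - 1 - e \<notin> D" unfolding B_def by auto
      have "e \<noteq> t - 1 - e" using a tc by simp
      then show "f (g a) = a" using a unfolding f_def g_def by auto
    qed
    show "f ` A \<subseteq> B"
    proof
      fix b assume "b \<in> f ` A"
      then obtain D d where a: "b = f (D, d)" "D \<in> DS n" "d \<in> D" "d < c" "t - 1 - d \<in> D" unfolding A_def by auto
      have fD: "finite D" "wt D = n" using a by (auto simp: DS_def)
      have ne: "t - 1 - d \<noteq> d" using a tc by simp
      have w1: "wt D = wt (D - {d}) + (2 * d + 1)" using wt_remove fD a by blast
      have w2: "wt (D - {d}) = wt (D - {d} - {t - 1 - d}) + (2 * (t - 1 - d) + 1)"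
        using wt_remove[of "D - {d}" "t - 1 - d"] fD a ne by simp
      have "D - {d} - {t - 1 - d} = D - {d, t - 1 - d}" by auto
      then have w3: "wt (D - {d}) = wt (D - {d, t - 1 - d}) + (2 * (t - 1 - d) + 1)" using w2 by simp
      have "2 * (t - 1 - d) + 1 + (2 * d + 1) = 2 * t" using a tc by simp
      then have "wt (D - {d, t - 1 - d}) = n - 2 * t" using w1 w3 fD by linarith
      then show "b \<in> B" using a fD unfolding B_def f_def by (auto simp: DS_def)
    qed
    show "g ` B \<subseteq> A"
    proof
      fix b assume "b \<in> g ` B"
      then obtain D e where a: "b = g (D, e)" "D \<in> DS (n - 2 * t)" "e < c" "e \<notin> D" "t - 1 - e \<notin> D"
        unfolding B_def by auto
      have fD: "finite D" "wt D = n - 2 * t" using a by (auto simp: DS_def)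
      have ne: "t - 1 - e \<noteq> e" using a tc by simp
      have w1: "wt (insert (t - 1 - e) D) = wt D + (2 * (t - 1 - e) + 1)"
        using wt_insert fD a by blast
      have w2: "wt (insert e (insert (t - 1 - e) D)) = wt (insert (t - 1 - e) D) + (2 * e + 1)"
        using wt_insert[of "insert (t - 1 - e) D" e] fD a ne by simp
      have "wt (insert e (insert (t - 1 - e) D)) = n" using w1 w2 fD a tc n by simp
      then show "b \<in> A" using a fD unfolding A_def g_def by (auto simp: DS_def)
    qed
  qed
  then have "card A = card B" by (rule bij_betw_same_card)
  then show ?thesis unfolding A_def B_def betaD_def deltaD_def c_def
    by (subst (1 2) sum_card_Sigma) auto
qed

lemma beta0:
  assumes t: "odd t" and n: "n < 2 * t" and D: "D \<in> DS n"
  shows "betaD t D = 0"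
proof -
  have fD: "finite D" "wt D = n" using D by (auto simp: DS_def)
  have "{d\<in>D. d < (t - 1) div 2 \<and> t - 1 - d \<in> D} = {}"
  proof (rule ccontr)
    assume "{d\<in>D. d < (t - 1) div 2 \<and> t - 1 - d \<in> D} \<noteq> {}"
    then obtain d where d: "d \<in> D" "d < (t - 1) div 2" "t - 1 - d \<in> D" by auto
    have tc: "t = 2 * ((t - 1) div 2) + 1" using oddt[OF t] .
    have ne: "t - 1 - d \<noteq> d" using d tc by simp
    have w1: "wt D = wt (D - {d}) + (2 * d + 1)" using wt_remove fD d by blast
    have "2 * (t - 1 - d) + 1 \<le> wt (D - {d})" using wt_ge[of "D - {d}" "t - 1 - d"] fD d ne by simp
    then show False using w1 fD n d tc by simp
  qed
  then show ?thesis unfolding betaD_def by (metis card.empty)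
qed


definition Sq :: "nat \<Rightarrow> nat" where "Sq n = card (DS n)"
definition Gq :: "nat \<Rightarrow> nat \<Rightarrow> nat" where "Gq t n = card {D\<in>DS n. (t - 1) div 2 \<in> D}"
definition Fq :: "nat \<Rightarrow> nat \<Rightarrow> nat" where "Fq t n = (\<Sum>D\<in>DS n. alphaD t D + betaD t D)"
definition Aq :: "nat \<Rightarrow> nat \<Rightarrow> nat" where "Aq t n = (\<Sum>D\<in>DS n. 2 * alphaD t D + X2 t D)"

lemma R1:
  assumes t: "odd t" and n: "t \<le> n"
  shows "Gq t n + Gq t (n - t) = Sq (n - t)"
proof -
  have "Sq (n - t) = card {D\<in>DS (n - t). (t - 1) div 2 \<in> D} + card {D\<in>DS (n - t). (t - 1) div 2 \<notin> D}"
    unfolding Sq_def by (rule card_split[OF DS_fin])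
  then show ?thesis unfolding Gq_def using central[OF t n] by simp
qed

lemma R1': "odd t \<Longrightarrow> n < t \<Longrightarrow> Gq t n = 0"
  unfolding Gq_def using central0 by (metis card.empty)

lemma R2:
  assumes t: "odd t" and n: "2 * t \<le> n"
  shows "Fq t n = Fq t (n - 2 * t) + (t - 1) div 2 * Sq (n - 2 * t) + Gq t (n - 2 * t)"
proof -
  define m where "m = n - 2 * t"
  have t0: "0 < t" using t by (rule odd_pos)
  have "Fq t n = (\<Sum>D\<in>DS n. alphaD t D) + (\<Sum>D\<in>DS n. betaD t D)"
    unfolding Fq_def by (rule sum.distrib)
  also have "\<dots> = (\<Sum>D\<in>DS m. gammaD t D) + (\<Sum>D\<in>DS m. deltaD t D)"
    using alpha_bij[OF t0 n] beta_bij[OF t n] m_def by simp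
  also have "\<dots> = (\<Sum>D\<in>DS m. gammaD t D + deltaD t D)" by (rule sum.distrib[symmetric])
  also have "\<dots> = (\<Sum>D\<in>DS m. (alphaD t D + betaD t D) + (t - 1) div 2 + of_bool ((t - 1) div 2 \<in> D))"
    by (rule sum.cong) (auto simp: F2[OF t] DS_def)
  also have "\<dots> = Fq t m + (\<Sum>D\<in>DS m. (t - 1) div 2) + (\<Sum>D\<in>DS m. of_bool ((t - 1) div 2 \<in> D))"
    unfolding Fq_def by (simp add: sum.distrib)
  also have "(\<Sum>D\<in>DS m. of_bool ((t - 1) div 2 \<in> D)) = Gq t m"
  proof -
    have "(\<Sum>D\<in>DS m. (of_bool ((t - 1) div 2 \<in> D) :: nat)) = card (DS m \<inter> {D. (t - 1) div 2 \<in> D})"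
      by (simp add: DS_fin)
    also have "DS m \<inter> {D. (t - 1) div 2 \<in> D} = {D\<in>DS m. (t - 1) div 2 \<in> D}" by auto
    finally show ?thesis unfolding Gq_def .
  qed
  finally show ?thesis unfolding m_def Sq_def by (simp add: mult.commute)
qed

lemma R2':
  assumes t: "odd t" and n: "n < 2 * t"
  shows "Fq t n = 0"
  unfolding Fq_def using alpha0[OF n] beta0[OF t n] by simp

lemma R3:
  assumes t: "odd t"
  shows "Aq t n = Gq t n + 2 * Fq t n"
proof -
  have "Aq t n = (\<Sum>D\<in>DS n. of_bool ((t - 1) div 2 \<in> D) + 2 * (alphaD t D + betaD t D))"
    unfolding Aq_def by (rule sum.cong) (auto simp: X2_split[OF t] DS_def)
  also have "\<dots> = (\<Sum>D\<in>DS n. of_bool ((t - 1) div 2 \<in> D)) + 2 * Fq t n"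
    unfolding Fq_def by (simp add: sum.distrib sum_distrib_left)
  also have "(\<Sum>D\<in>DS n. of_bool ((t - 1) div 2 \<in> D)) = Gq t n"
  proof -
    have "(\<Sum>D\<in>DS n. (of_bool ((t - 1) div 2 \<in> D) :: nat)) = card (DS n \<inter> {D. (t - 1) div 2 \<in> D})"
      by (simp add: DS_fin)
    also have "DS n \<inter> {D. (t - 1) div 2 \<in> D} = {D\<in>DS n. (t - 1) div 2 \<in> D}" by auto
    finally show ?thesis unfolding Gq_def .
  qed
  finally show ?thesis .
qed

lemma alg:
  fixes G F S u k :: "'a::comm_ring_1"
  assumes e1: "G + u * G = u * S" and e2: "F = u * u * (F + k * S + G)"
  shows "(G + F + F) * ((1 - u * u) * (1 + u)) = S * (u * (1 + (2 * k) * u + (2 * k + 1) * (u * u)))"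
proof -
  have a: "G * (1 + u) = u * S" using e1 by (simp add: algebra_simps)
  have b: "F * (1 - u * u) = u * u * (k * S + G)"
  proof -
    have "F - u * u * F = u * u * (k * S + G)" using e2 by (simp add: algebra_simps)
    then show ?thesis by (simp add: algebra_simps)
  qed
  have "(G + F + F) * ((1 - u * u) * (1 + u)) = (G * (1 + u)) * (1 - u * u) + 2 * (F * (1 - u * u)) * (1 + u)"
    by (simp add: algebra_simps)
  also have "\<dots> = u * S * (1 - u * u) + 2 * (u * u * (k * S + G)) * (1 + u)" by (simp only: a b)
  also have "\<dots> = u * S * (1 - u * u) + 2 * u * u * k * S * (1 + u) + 2 * u * u * (G * (1 + u))"
    by (simp add: algebra_simps)
  also have "\<dots> = u * S * (1 - u * u) + 2 * u * u * k * S * (1 + u) + 2 * u * u * (u * S)" by (simp only: a)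
  also have "\<dots> = S * (u * (1 + (2 * k) * u + (2 * k + 1) * (u * u)))" by (simp add: algebra_simps)
  finally show ?thesis .
qed


definition Sf :: "real fps" where "Sf = Abs_fps (\<lambda>n. real (Sq n))"
definition Gf :: "nat \<Rightarrow> real fps" where "Gf t = Abs_fps (\<lambda>n. real (Gq t n))"
definition Ff :: "nat \<Rightarrow> real fps" where "Ff t = Abs_fps (\<lambda>n. real (Fq t n))"
definition Af :: "nat \<Rightarrow> real fps" where "Af t = Abs_fps (\<lambda>n. real (Aq t n))"

lemma of_nat_mult_nth: "fps_nth ((of_nat c :: real fps) * f) n = real c * fps_nth f n"
  by (simp add: fps_of_nat[symmetric])

lemma E1:
  assumes t: "odd t"
  shows "Gf t + fps_X ^ t * Gf t = fps_X ^ t * Sf"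
proof (rule fps_ext)
  fix n
  show "fps_nth (Gf t + fps_X ^ t * Gf t) n = fps_nth (fps_X ^ t * Sf) n"
  proof (cases "n < t")
    case True
    then show ?thesis using R1'[OF t True] by (simp add: fps_X_power_mult_nth Gf_def Sf_def)
  next
    case False
    then have "real (Gq t n) + real (Gq t (n - t)) = real (Sq (n - t))"
      using R1[OF t] by (metis not_less of_nat_add)
    then show ?thesis using False by (simp add: fps_X_power_mult_nth Gf_def Sf_def)
  qed
qed

lemma E2:
  assumes t: "odd t"
  shows "Ff t = fps_X ^ t * fps_X ^ t * (Ff t + of_nat ((t - 1) div 2) * Sf + Gf t)"
proof (rule fps_ext)
  fix n
  have X: "(fps_X ^ t * fps_X ^ t :: real fps) = fps_X ^ (2 * t)" by (simp add: mult_2 power_add)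
  show "fps_nth (Ff t) n = fps_nth (fps_X ^ t * fps_X ^ t * (Ff t + of_nat ((t - 1) div 2) * Sf + Gf t)) n"
    unfolding X
  proof (cases "n < 2 * t")
    case True
    then show "fps_nth (Ff t) n = fps_nth (fps_X ^ (2 * t) * (Ff t + of_nat ((t - 1) div 2) * Sf + Gf t)) n"
      using R2'[OF t True] by (simp add: fps_X_power_mult_nth Ff_def)
  next
    case False
    then have "real (Fq t n) = real (Fq t (n - 2 * t)) + real ((t - 1) div 2) * real (Sq (n - 2 * t)) + real (Gq t (n - 2 * t))"
      using R2[OF t] by (metis not_less of_nat_add of_nat_mult)
    then show "fps_nth (Ff t) n = fps_nth (fps_X ^ (2 * t) * (Ff t + of_nat ((t - 1) div 2) * Sf + Gf t)) n"
      using False by (simp add: fps_X_power_mult_nth Gf_def Sf_def Ff_def of_nat_mult_nth)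
  qed
qed

lemma E3:
  assumes t: "odd t"
  shows "Af t = Gf t + Ff t + Ff t"
proof (rule fps_ext)
  fix n
  show "fps_nth (Af t) n = fps_nth (Gf t + Ff t + Ff t) n"
    by (simp only: fps_add_nth Af_def Gf_def Ff_def fps_nth_Abs_fps R3[OF t] of_nat_add of_nat_mult mult_2)
qed

lemma main_eq:
  assumes t: "odd t"
  shows "Af t * ((1 - fps_X ^ (2 * t)) * (1 + fps_X ^ t))
       = Sf * (fps_X ^ t * (1 + of_nat (t - 1) * fps_X ^ t + of_nat t * fps_X ^ (2 * t)))"
proof -
  define c where "c = (t - 1) div 2"
  have tc: "t = 2 * c + 1" using oddt[OF t] c_def by simp
  have X: "(fps_X ^ (2 * t) :: real fps) = fps_X ^ t * fps_X ^ t" by (simp add: mult_2 power_add)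
  have k1: "(of_nat (t - 1) :: real fps) = 2 * of_nat c" using tc by simp
  have k2: "(of_nat t :: real fps) = 2 * of_nat c + 1" using tc by simp
  have e2: "Ff t = fps_X ^ t * fps_X ^ t * (Ff t + of_nat c * Sf + Gf t)" using E2[OF t] c_def by simp
  show ?thesis unfolding E3[OF t] X k1 k2 by (rule alg[OF E1[OF t] e2])
qed


primrec build :: "nat list \<Rightarrow> nat list" where
  "build [] = []"
| "build (d # ds) = Suc d # map Suc (build ds) @ replicate (d - length (build ds)) 1"

definition hdlen :: "nat list \<Rightarrow> nat" where
  "hdlen ds = (case ds of [] \<Rightarrow> 0 | d # _ \<Rightarrow> Suc d)"

lemma hdlen_le: "sorted_wrt (>) (d # ds) \<Longrightarrow> hdlen ds \<le> d"
  by (cases ds) (auto simp: hdlen_def)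

lemma build_len: "sorted_wrt (>) ds \<Longrightarrow> length (build ds) = hdlen ds"
proof (induction ds)
  case Nil then show ?case by (simp add: hdlen_def)
next
  case (Cons d ds)
  then have "length (build ds) = hdlen ds" by simp
  moreover have "hdlen ds \<le> d" using hdlen_le[OF Cons.prems] .
  ultimately show ?case by (simp add: hdlen_def)
qed

lemma build_L0: "Lf (build ds) 0 = hdlen ds"
  by (cases ds) (auto simp: Lf_def hdlen_def)

lemma part_le_L0: "is_partition lam \<Longrightarrow> x \<in> set lam \<Longrightarrow> x \<le> Lf lam 0"
  by (metis in_set_conv_nth Lf_def Lf_mono le0 length_pos_if_in_set)

lemma conj_nth: "c < foldr max lam 0 \<Longrightarrow> conj_part lam ! c = Cf lam c"
  unfolding conj_part_def Cf_def by (subst nth_map) (auto simp del: upt_Suc)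

lemma sorted_rep: "sorted_wrt (\<ge>) (replicate m (x::nat))"
  by (induction m) auto

lemma build_props:
  assumes "sorted_wrt (>) ds"
  shows "is_partition (build ds) \<and> self_conj (build ds)"
  using assms
proof (induction ds)
  case Nil then show ?case
    by (simp add: is_partition_def self_conj_def conj_part_def)
next
  case (Cons d ds)
  define mu where "mu = build ds"
  define m where "m = d - length mu"
  have sd: "sorted_wrt (>) ds" using Cons.prems by simp
  have IH: "is_partition mu" "self_conj mu" using Cons.IH[OF sd] mu_def by auto
  have lmu: "length mu = hdlen ds" using build_len[OF sd] mu_def by simp
  have hle: "hdlen ds \<le> d" using hdlen_le[OF Cons.prems] .
  have L0mu: "Lf mu 0 = hdlen ds" using build_L0 mu_def by simp
  have lam: "build (d # ds) = Suc d # map Suc mu @ replicate m 1" by (simp add: mu_def m_def)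
  have bound: "\<forall>x\<in>set mu. x \<le> d" using part_le_L0[OF IH(1)] L0mu hle by fastforce
  have P: "is_partition (Suc d # map Suc mu @ replicate m 1)"
    using IH(1) bound unfolding is_partition_def
    by (auto simp: sorted_wrt_append sorted_wrt_map sorted_rep)
  define lam where "lam = Suc d # map Suc mu @ replicate m 1"
  have len: "length lam = Suc d" unfolding lam_def m_def using lmu hle by simp
  have fm: "foldr max lam 0 = Suc d" using foldr_max_part[OF P[folded lam_def]] by (simp add: lam_def Lf_def)
  have "conj_part lam = lam"
  proof (rule nth_equalityI)
    show "length (conj_part lam) = length lam" using fm len unfolding conj_part_def by (simp del: upt_Suc)
  next
    fix c assume "c < length (conj_part lam)"
    then have c: "c < Suc d" using fm unfolding conj_part_def by (simp del: upt_Suc)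
    then have e1: "conj_part lam ! c = Cf lam c" using conj_nth fm by simp
    show "conj_part lam ! c = lam ! c"
    proof (cases c)
      case 0
      have "filter (\<lambda>x. Suc 0 \<le> x) lam = lam" using P[folded lam_def]
        by (auto simp: is_partition_def Suc_le_eq intro: filter_True)
      then show ?thesis using e1 0 len by (simp add: Cf_def lam_def)
    next
      case (Suc c')
      have cd: "c' < d" using c Suc by simp
      have f1: "filter (\<lambda>x. Suc (Suc c') \<le> x) (map Suc mu) = map Suc (filter (\<lambda>x. Suc c' \<le> x) mu)"
        by (simp add: filter_map o_def)
      have f2: "filter (\<lambda>x. Suc (Suc c') \<le> x) (replicate m (1::nat)) = []" by (induction m) auto
      have "Cf lam c = Suc (Cf mu c')" unfolding Cf_def lam_def Suc using cd f1 f2 by simp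
      also have "\<dots> = Suc (Lf mu c')" using selfconj_Cf[OF IH] by simp
      also have "\<dots> = lam ! c"
      proof (cases "c' < length mu")
        case True then show ?thesis unfolding lam_def Suc by (simp add: Lf_def nth_append)
      next
        case False
        have "c' - length mu < m" using cd False m_def by simp
        then show ?thesis using False unfolding lam_def Suc by (simp add: Lf_def nth_append)
      qed
      finally show ?thesis using e1 by simp
    qed
  qed
  then show ?case using P lam lam_def by (simp add: self_conj_def)
qed

lemma build_sum: "sorted_wrt (>) ds \<Longrightarrow> sum_list (build ds) = sum_list (map (\<lambda>d. 2 * d + 1) ds)"
proof (induction ds)
  case Nil then show ?case by simp
next
  case (Cons d ds)
  have sd: "sorted_wrt (>) ds" using Cons.prems by simp
  have l: "length (build ds) \<le> d" using build_len[OF sd] hdlen_le[OF Cons.prems] by simp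
  have "sum_list (map Suc xs) = sum_list xs + length xs" for xs :: "nat list"
    by (induction xs) auto
  then show ?case using Cons.IH[OF sd] l by (simp add: sum_list_replicate)
qed

lemma build_pf:
  assumes "sorted_wrt (>) (d # ds)"
  shows "pf (build (d # ds)) 0 = int d"
    and "r < length (build ds) \<Longrightarrow> pf (build (d # ds)) (Suc r) = pf (build ds) r"
    and "length (build ds) \<le> r \<Longrightarrow> pf (build (d # ds)) (Suc r) < 0 \<and> pf (build ds) r < 0"
proof -
  show "pf (build (d # ds)) 0 = int d" by (simp add: pf_def Lf_def)
  show "r < length (build ds) \<Longrightarrow> pf (build (d # ds)) (Suc r) = pf (build ds) r"
    by (simp add: pf_def Lf_def nth_append)
  assume r: "length (build ds) \<le> r"
  have "Lf (build (d # ds)) (Suc r) \<le> 1"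
    using r by (auto simp: Lf_def nth_append)
  then show "pf (build (d # ds)) (Suc r) < 0 \<and> pf (build ds) r < 0"
    using r by (simp add: pf_def Lf_def)
qed

lemma build_Dset: "sorted_wrt (>) ds \<Longrightarrow> Dset (build ds) = set ds"
proof (induction ds)
  case Nil
  have neg: "\<And>r. pf [] r < 0" by (simp add: pf_def Lf_def)
  have "Dset [] = {}"
  proof (rule ccontr)
    assume "Dset [] \<noteq> {}"
    then obtain n r where "int n = pf [] r" unfolding Dset_def by auto
    with neg[of r] show False by simp
  qed
  then show ?case by simp
next
  case (Cons d ds)
  have sd: "sorted_wrt (>) ds" using Cons.prems by simp
  show ?case
  proof (intro set_eqI iffI)
    fix n assume "n \<in> Dset (build (d # ds))"
    then obtain r where r: "int n = pf (build (d # ds)) r" unfolding Dset_def by auto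
    show "n \<in> set (d # ds)"
    proof (cases r)
      case 0 then show ?thesis using r build_pf(1)[OF Cons.prems] by simp
    next
      case (Suc r')
      show ?thesis
      proof (cases "r' < length (build ds)")
        case True
        then have "int n = pf (build ds) r'" using r Suc build_pf(2)[OF Cons.prems] by simp
        then have "n \<in> Dset (build ds)" unfolding Dset_def by auto
        then show ?thesis using Cons.IH[OF sd] by simp
      next
        case False
        then show ?thesis using r Suc build_pf(3)[OF Cons.prems, of r'] by simp
      qed
    qed
  next
    fix n assume n: "n \<in> set (d # ds)"
    show "n \<in> Dset (build (d # ds))"
    proof (cases "n = d")
      case True
      then show ?thesis using build_pf(1)[OF Cons.prems] unfolding Dset_def
        by (metis mem_Collect_eq rangeI)
    next
      case False
      then have "n \<in> Dset (build ds)" using n Cons.IH[OF sd] by simp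
      then obtain r where r: "int n = pf (build ds) r" unfolding Dset_def by auto
      have "r < length (build ds)"
      proof (rule ccontr)
        assume "\<not> r < length (build ds)"
        then have "pf (build ds) r < 0" using build_pf(3)[OF Cons.prems, of r] by simp
        with r show False by simp
      qed
      then have "int n = pf (build (d # ds)) (Suc r)" using r build_pf(2)[OF Cons.prems] by simp
      then show ?thesis unfolding Dset_def by (metis mem_Collect_eq rangeI)
    qed
  qed
qed

definition Lam :: "nat set \<Rightarrow> nat list" where
  "Lam D = build (rev (sorted_list_of_set D))"

lemma Lam_props:
  assumes "finite D"
  shows "is_partition (Lam D)" "self_conj (Lam D)" "sum_list (Lam D) = wt D" "Dset (Lam D) = D"
proof -
  have s: "sorted_wrt (>) (rev (sorted_list_of_set D))"
    using strict_sorted_list_of_set[of D] by (simp add: sorted_wrt_rev)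
  show "is_partition (Lam D)" "self_conj (Lam D)" using build_props[OF s] by (auto simp: Lam_def)
  show "sum_list (Lam D) = wt D" unfolding Lam_def build_sum[OF s] wt_def
    using assms by (simp add: sum_list_distinct_conv_sum_set)
  show "Dset (Lam D) = D" unfolding Lam_def build_Dset[OF s] using assms by simp
qed

lemma rank:
  fixes f :: "nat \<Rightarrow> int"
  assumes dec: "\<And>r s. r < s \<Longrightarrow> f s < f r"
  shows "{x \<in> range f. f r < x} = f ` {..<r}" "card {x \<in> range f. f r < x} = r"
proof -
  show e: "{x \<in> range f. f r < x} = f ` {..<r}"
  proof (intro set_eqI iffI)
    fix x assume "x \<in> {x \<in> range f. f r < x}"
    then obtain s where s: "x = f s" "f r < f s" by auto
    have "s < r"
    proof (rule ccontr)
      assume "\<not> s < r"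
      then have "r = s \<or> r < s" by auto
      then show False using dec s by fastforce
    qed
    then show "x \<in> f ` {..<r}" using s by auto
  next
    fix x assume "x \<in> f ` {..<r}"
    then show "x \<in> {x \<in> range f. f r < x}" using dec by auto
  qed
  have "inj f" by (metis dec linorder_inj_onI' less_irrefl)
  then show "card {x \<in> range f. f r < x} = r" unfolding e by (simp add: card_image inj_on_subset)
qed

lemma rank_eq:
  fixes f g :: "nat \<Rightarrow> int"
  assumes df: "\<And>r s. r < s \<Longrightarrow> f s < f r" and dg: "\<And>r s. r < s \<Longrightarrow> g s < g r"
    and R: "range f = range g"
  shows "f r = g r"
proof -
  have aux: "\<not> f' r < g' r" if df': "\<And>r s. r < s \<Longrightarrow> f' s < f' r" and dg': "\<And>r s. r < s \<Longrightarrow> g' s < g' r"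
    and R': "range f' = range g'" for f' g' :: "nat \<Rightarrow> int"
  proof
    assume lt: "f' r < g' r"
    have sub: "{x \<in> range f'. g' r < x} \<subset> {x \<in> range f'. f' r < x}"
    proof
      show "{x \<in> range f'. g' r < x} \<subseteq> {x \<in> range f'. f' r < x}" using lt by auto
      have "g' r \<in> range f'" using R' by auto
      then show "{x \<in> range f'. g' r < x} \<noteq> {x \<in> range f'. f' r < x}" using lt by blast
    qed
    have fin: "finite {x \<in> range f'. f' r < x}" using rank(1)[of f' r, OF df'] by simp
    have "card {x \<in> range f'. g' r < x} < card {x \<in> range f'. f' r < x}"
      by (rule psubset_card_mono[OF fin sub])
    moreover have "card {x \<in> range f'. g' r < x} = r" using rank(2)[of g' r, OF dg'] R' by simp
    ultimately show False using rank(2)[of f' r, OF df'] by simp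
  qed
  have "\<not> f r < g r" by (rule aux[OF df dg R])
  moreover have "\<not> g r < f r" by (rule aux[OF dg df R[symmetric]])
  ultimately show ?thesis by simp
qed

lemma Dset_inj:
  assumes P1: "is_partition l1" and S1: "self_conj l1" and P2: "is_partition l2" and S2: "self_conj l2"
    and E: "Dset l1 = Dset l2"
  shows "l1 = l2"
proof -
  have R: "range (pf l1) = range (pf l2)" using range_pf_PD[OF P1 S1] range_pf_PD[OF P2 S2] E by simp
  have pe: "pf l1 r = pf l2 r" for r
    by (rule rank_eq[OF pf_strict[OF P1] pf_strict[OF P2] R])
  have Le: "Lf l1 r = Lf l2 r" for r using pe[of r] by (simp add: pf_def)
  have len: "length l1 = length l2" using selfconj_len[OF P1 S1] selfconj_len[OF P2 S2] Le[of 0] by simp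
  show ?thesis
  proof (rule nth_equalityI)
    show "length l1 = length l2" by (rule len)
    fix i assume "i < length l1"
    then show "l1 ! i = l2 ! i" using Le[of i] len by (simp add: Lf_def)
  qed
qed

lemma Dset_fin:
  assumes P: "is_partition lam" and S: "self_conj lam"
  shows "finite (Dset lam)"
proof -
  have "Dset lam \<subseteq> {..<length lam}"
  proof
    fix n assume "n \<in> Dset lam"
    then obtain r where "int n = pf lam r" unfolding Dset_def by auto
    then show "n \<in> {..<length lam}" using pf_bounds(1)[OF P S, of r] by simp
  qed
  then show ?thesis using finite_subset by blast
qed

definition SC :: "nat \<Rightarrow> nat list set" where
  "SC n = {lam. partition_of lam n \<and> self_conj lam}"

lemma Lam_bij: "bij_betw Lam (DS n) (SC n)"
proof (rule bij_betw_byWitness[where f' = Dset])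
  show "\<forall>D\<in>DS n. Dset (Lam D) = D" using Lam_props(4) by (auto simp: DS_def)
  have hback: "Lam (Dset lam) = lam" if "lam \<in> SC n" for lam
  proof -
    have P: "is_partition lam" "self_conj lam" using that by (auto simp: SC_def partition_of_def)
    have f: "finite (Dset lam)" by (rule Dset_fin[OF P])
    show ?thesis by (rule Dset_inj[OF Lam_props(1)[OF f] Lam_props(2)[OF f] P Lam_props(4)[OF f]])
  qed
  show "\<forall>lam\<in>SC n. Lam (Dset lam) = lam" using hback by blast
  show "Lam ` DS n \<subseteq> SC n" using Lam_props by (auto simp: DS_def SC_def partition_of_def)
  show "Dset ` SC n \<subseteq> DS n"
  proof
    fix D assume "D \<in> Dset ` SC n"
    then obtain lam where lam: "lam \<in> SC n" "D = Dset lam" by auto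
    have P: "is_partition lam" "self_conj lam" "sum_list lam = n" using lam by (auto simp: SC_def partition_of_def)
    have f: "finite D" using Dset_fin[OF P(1,2)] lam by simp
    have "wt D = sum_list (Lam D)" using Lam_props(3)[OF f] by simp
    also have "\<dots> = n" using hback[OF lam(1)] lam P by simp
    finally show "D \<in> DS n" using f by (simp add: DS_def)
  qed
qed


lemma astar_Aq:
  assumes t: "0 < t"
  shows "a_star t n = Aq t n"
proof -
  have "a_star t n = (\<Sum>lam\<in>SC n. n_hook t lam)" unfolding a_star_def SC_def by simp
  also have "\<dots> = (\<Sum>D\<in>DS n. n_hook t (Lam D))"
    by (rule sum.reindex_bij_betw[OF Lam_bij, symmetric])
  also have "\<dots> = (\<Sum>D\<in>DS n. 2 * alphaD t D + X2 t D)"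
  proof (rule sum.cong)
    fix D assume "D \<in> DS n"
    then have f: "finite D" by (simp add: DS_def)
    have "n_hook t (Lam D) = card {x \<in> PD (Dset (Lam D)). int t - 1 - x \<in> PD (Dset (Lam D))}"
      by (rule n_hook_PD[OF Lam_props(1)[OF f] Lam_props(2)[OF f] t])
    also have "\<dots> = 2 * alphaD t D + X2 t D" unfolding Lam_props(4)[OF f] by (rule hookD[OF f t])
    finally show "n_hook t (Lam D) = 2 * alphaD t D + X2 t D" .
  qed simp
  finally show ?thesis unfolding Aq_def .
qed

lemma sc_Sq: "sc m = (if m < 0 then 0 else Sq (nat m))"
proof -
  have "card (SC (nat m)) = card (DS (nat m))" using bij_betw_same_card[OF Lam_bij] by simp
  then show ?thesis unfolding sc_def Sq_def SC_def by simp
qed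

lemma qstar_Sq: "qstar m = (if m < 0 then 0 else Sq (nat m))"
proof -
  define n where "n = nat m"
  define Q where "Q = {S :: nat set. finite S \<and> (\<forall>x\<in>S. odd x) \<and> \<Sum>S = n}"
  define f :: "nat \<Rightarrow> nat" where "f = (\<lambda>d. 2 * d + 1)"
  have injf: "inj f" unfolding f_def by (auto simp: inj_def)
  have "bij_betw (\<lambda>D. f ` D) (DS n) Q"
  proof (rule bij_betw_byWitness[where f' = "\<lambda>S. {d. f d \<in> S}"])
    show "\<forall>D\<in>DS n. {d. f d \<in> f ` D} = D" using injf by (auto dest: injD)
    show "\<forall>S\<in>Q. f ` {d. f d \<in> S} = S"
    proof
      fix S assume "S \<in> Q"
      then have o: "\<forall>x\<in>S. odd x" unfolding Q_def by simp
      show "f ` {d. f d \<in> S} = S"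
      proof (intro set_eqI iffI)
        fix x assume x: "x \<in> S"
        then have "odd x" using o by simp
        then have "x = f (x div 2)" unfolding f_def by (auto elim!: oddE)
        then show "x \<in> f ` {d. f d \<in> S}" using x by (metis (mono_tags) imageI mem_Collect_eq)
      qed auto
    qed
    show "(\<lambda>D. f ` D) ` DS n \<subseteq> Q"
    proof
      fix S assume "S \<in> (\<lambda>D. f ` D) ` DS n"
      then obtain D where D: "D \<in> DS n" "S = f ` D" by auto
      have fD: "finite D" "wt D = n" using D by (auto simp: DS_def)
      have ij: "inj_on f D" using injf by (simp add: inj_on_def inj_def)
      have "\<Sum>S = sum f D" using D(2) by (simp add: sum.reindex[OF ij])
      also have "\<dots> = n" using fD unfolding wt_def f_def by simp
      finally show "S \<in> Q" using D fD unfolding Q_def f_def by auto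
    qed
    show "(\<lambda>S. {d. f d \<in> S}) ` Q \<subseteq> DS n"
    proof
      fix D assume "D \<in> (\<lambda>S. {d. f d \<in> S}) ` Q"
      then obtain S where S: "S \<in> Q" "D = {d. f d \<in> S}" by auto
      have fS: "finite S" "\<forall>x\<in>S. odd x" "\<Sum>S = n" using S unfolding Q_def by auto
      have fD: "finite D" using S(2) finite_vimageI[OF fS(1) injf] by (simp add: vimage_def)
      have im: "f ` D = S"
      proof (intro set_eqI iffI)
        fix x assume x: "x \<in> S"
        then have "odd x" using fS by simp
        then have "x = f (x div 2)" unfolding f_def by (auto elim!: oddE)
        then show "x \<in> f ` D" using x S(2) by (metis (mono_tags) imageI mem_Collect_eq)
      qed (use S(2) in auto)
      have "wt D = sum f D" unfolding wt_def f_def by simp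
      also have "\<dots> = \<Sum>(f ` D)"
      proof -
        have ij: "inj_on f D" using injf by (simp add: inj_on_def inj_def)
        show ?thesis by (simp add: sum.reindex[OF ij])
      qed
      also have "\<dots> = n" using im fS by simp
      finally show "D \<in> DS n" using fD by (simp add: DS_def)
    qed
  qed
  then have "card Q = card (DS n)" using bij_betw_same_card by metis
  then show ?thesis unfolding qstar_def Sq_def Q_def n_def by simp
qed

lemma prod_nth:
  assumes "n \<le> N"
  shows "fps_nth (\<Prod>j<N. 1 + fps_X ^ (2 * j + 1) :: real fps) n = real (Sq n)"
proof -
  have "(\<Prod>j<N. 1 + fps_X ^ (2 * j + 1) :: real fps) = (\<Prod>j<N. fps_X ^ (2 * j + 1) + 1)"
    by (simp add: add.commute)
  also have "\<dots> = (\<Sum>D\<in>Pow {..<N}. (\<Prod>j\<in>D. fps_X ^ (2 * j + 1)) * (\<Prod>j\<in>{..<N} - D. 1))"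
    by (rule prod_add) simp
  also have "\<dots> = (\<Sum>D\<in>Pow {..<N}. fps_X ^ wt D)"
    by (rule sum.cong) (simp_all add: wt_def power_sum)
  finally have e: "(\<Prod>j<N. 1 + fps_X ^ (2 * j + 1) :: real fps) = (\<Sum>D\<in>Pow {..<N}. fps_X ^ wt D)" .
  have "fps_nth (\<Sum>D\<in>Pow {..<N}. (fps_X ^ wt D :: real fps)) n = (\<Sum>D\<in>Pow {..<N}. of_bool (wt D = n))"
    by (simp add: fps_sum_nth of_bool_def eq_commute)
  also have "\<dots> = real (card (Pow {..<N} \<inter> {D. wt D = n}))" by simp
  also have "Pow {..<N} \<inter> {D. wt D = n} = DS n"
  proof (intro set_eqI iffI)
    fix D assume "D \<in> Pow {..<N} \<inter> {D. wt D = n}"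
    then show "D \<in> DS n" by (auto simp: DS_def intro: finite_subset)
  next
    fix D assume D: "D \<in> DS n"
    then have "D \<in> Pow {..<n}" using DS_sub by blast
    then show "D \<in> Pow {..<N} \<inter> {D. wt D = n}" using D assms by (auto simp: DS_def)
  qed
  finally show ?thesis unfolding e Sq_def .
qed

lemma odd_poch_Sf: "odd_poch = Sf"
proof -
  have "(\<lambda>N. \<Prod>j<N. 1 + fps_X ^ (2 * j + 1) :: real fps) \<longlonglongrightarrow> Sf"
  proof (rule tendsto_fpsI)
    fix n
    show "\<forall>\<^sub>F N in sequentially. fps_nth (\<Prod>j<N. 1 + fps_X ^ (2 * j + 1) :: real fps) n = fps_nth Sf n"
      by (rule eventually_sequentiallyI[of n]) (unfold Sf_def fps_nth_Abs_fps, rule prod_nth)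
  qed
  then show ?thesis unfolding odd_poch_def by (rule limI)
qed


definition Rj :: "nat \<Rightarrow> nat \<Rightarrow> real" where
  "Rj t j = (if j = 0 then 0 else if odd j then real j else real t - real j)"
definition Rf :: "nat \<Rightarrow> real fps" where
  "Rf t = Abs_fps (\<lambda>m. if t dvd m then Rj t (m div t) else 0)"

lemma Rj_id:
  assumes t: "0 < t"
  shows "Rj t j + (if j < 1 then 0 else Rj t (j - 1)) - (if j < 2 then 0 else Rj t (j - 2))
         - (if j < 3 then 0 else Rj t (j - 3))
       = (if j = 1 then 1 else 0) + (real t - 1) * (if j = 2 then 1 else 0) + real t * (if j = 3 then 1 else 0)"
proof -
  consider "j = 0" | "j = 1" | "j = 2" | "j = 3" | k where "j = k + 4"
  proof -
    have "j = 0 \<or> j = 1 \<or> j = 2 \<or> j = 3 \<or> (\<exists>k. j = k + 4)" by presburger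
    then show thesis using that by blast
  qed
  then show ?thesis
  proof cases
    case 5
    show ?thesis
    proof (cases "even k")
      case True
      then show ?thesis using 5 by (simp add: Rj_def)
    next
      case False
      then show ?thesis using 5 by (simp add: Rj_def)
    qed
  qed (simp_all add: Rj_def)
qed

lemma Rf_Den:
  assumes t: "0 < t"
  shows "Rf t * ((1 - fps_X ^ (2 * t)) * (1 + fps_X ^ t))
       = fps_X ^ t * (1 + of_nat (t - 1) * fps_X ^ t + of_nat t * fps_X ^ (2 * t))"
proof -
  have X2: "(fps_X ^ (2 * t) :: real fps) = fps_X ^ t * fps_X ^ t" by (simp add: mult_2 power_add)
  have X3: "(fps_X ^ (3 * t) :: real fps) = fps_X ^ t * fps_X ^ t * fps_X ^ t"
    by (simp add: numeral_3_eq_3 power_add)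
  have L: "Rf t * ((1 - fps_X ^ (2 * t)) * (1 + fps_X ^ t))
      = Rf t + fps_X ^ t * Rf t - fps_X ^ (2 * t) * Rf t - fps_X ^ (3 * t) * Rf t"
    unfolding X2 X3 by (simp add: algebra_simps)
  have Rr: "fps_X ^ t * (1 + of_nat (t - 1) * fps_X ^ t + of_nat t * fps_X ^ (2 * t))
      = fps_X ^ t + of_nat (t - 1) * fps_X ^ (2 * t) + (of_nat t :: real fps) * fps_X ^ (3 * t)"
    unfolding X2 X3 by (simp add: algebra_simps)
  show ?thesis unfolding L Rr
  proof (rule fps_ext)
    fix n
    define R where "R = (\<lambda>m. if t dvd m then Rj t (m div t) else 0)"
    have lhs: "fps_nth (Rf t + fps_X ^ t * Rf t - fps_X ^ (2 * t) * Rf t - fps_X ^ (3 * t) * Rf t) n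
        = R n + (if n < t then 0 else R (n - t)) - (if n < 2 * t then 0 else R (n - 2 * t))
          - (if n < 3 * t then 0 else R (n - 3 * t))"
      by (simp only: fps_sub_nth fps_add_nth fps_X_power_mult_nth) (simp add: Rf_def R_def)
    have rhs: "fps_nth (fps_X ^ t + of_nat (t - 1) * fps_X ^ (2 * t) + (of_nat t :: real fps) * fps_X ^ (3 * t)) n
        = (if n = t then 1 else 0) + real (t - 1) * (if n = 2 * t then 1 else 0) + real t * (if n = 3 * t then 1 else 0)"
      by (simp only: fps_add_nth of_nat_mult_nth fps_X_power_nth)
    have key: "R n + (if n < t then 0 else R (n - t)) - (if n < 2 * t then 0 else R (n - 2 * t))
          - (if n < 3 * t then 0 else R (n - 3 * t))
        = (if n = t then 1 else 0) + real (t - 1) * (if n = 2 * t then 1 else 0) + real t * (if n = 3 * t then 1 else 0)"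
    proof (cases "t dvd n")
      case True
      then obtain j where n: "n = t * j" by (auto elim: dvdE)
      have a: "\<And>k. (n < k * t) = (j < k)" using n t by (simp add: mult.commute)
      have b: "\<And>k. k \<le> j \<Longrightarrow> R (n - k * t) = (if j - k = 0 then 0 else Rj t (j - k))"
      proof -
        fix k assume "k \<le> j"
        then have "n - k * t = t * (j - k)" using n by (simp add: algebra_simps diff_mult_distrib2)
        then show "R (n - k * t) = (if j - k = 0 then 0 else Rj t (j - k))" using t
          by (simp add: R_def Rj_def)
      qed
      have c: "\<And>k. (n = k * t) = (j = k)" using n t by (simp add: mult.commute)
      have r0: "R n = Rj t j" using n t by (simp add: R_def)
      have "R n + (if n < t then 0 else R (n - t)) - (if n < 2 * t then 0 else R (n - 2 * t))
          - (if n < 3 * t then 0 else R (n - 3 * t))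
          = Rj t j + (if j < 1 then 0 else Rj t (j - 1)) - (if j < 2 then 0 else Rj t (j - 2))
            - (if j < 3 then 0 else Rj t (j - 3))"
        using a[of 1] a[of 2] a[of 3] b[of 1] b[of 2] b[of 3] r0 by (simp add: Rj_def)
      also have "\<dots> = (if j = 1 then 1 else 0) + (real t - 1) * (if j = 2 then 1 else 0) + real t * (if j = 3 then 1 else 0)"
        by (rule Rj_id[OF t])
      also have "\<dots> = (if n = t then 1 else 0) + real (t - 1) * (if n = 2 * t then 1 else 0) + real t * (if n = 3 * t then 1 else 0)"
        using c[of 1] c[of 2] c[of 3] t by (simp add: of_nat_diff)
      finally show ?thesis .
    next
      case False
      have z: "\<And>k. \<not> n < k * t \<Longrightarrow> R (n - k * t) = 0"
      proof -
        fix k assume "\<not> n < k * t"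
        then have "\<not> t dvd (n - k * t)" using False by (metis dvd_diff_nat dvd_triv_right le_add_diff_inverse2 not_less dvd_add)
        then show "R (n - k * t) = 0" by (simp add: R_def)
      qed
      have "R n = 0" using False by (simp add: R_def)
      moreover have "n \<noteq> t" "n \<noteq> 2 * t" "n \<noteq> 3 * t" using False by auto
      ultimately show ?thesis using z[of 1] z[of 2] z[of 3] by simp
    qed
    show "fps_nth (Rf t + fps_X ^ t * Rf t - fps_X ^ (2 * t) * Rf t - fps_X ^ (3 * t) * Rf t) n
        = fps_nth (fps_X ^ t + of_nat (t - 1) * fps_X ^ (2 * t) + (of_nat t :: real fps) * fps_X ^ (3 * t)) n"
      unfolding lhs rhs by (rule key)
  qed
qed

lemma Af_eq:
  assumes t: "odd t"
  shows "Af t = Sf * Rf t"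
proof -
  have t0: "0 < t" using t by (rule odd_pos)
  define Den :: "real fps" where "Den = (1 - fps_X ^ (2 * t)) * (1 + fps_X ^ t)"
  have "fps_nth Den 0 = 1" using t0 by (simp add: Den_def)
  then have "Den \<noteq> 0" by auto
  moreover have "Af t * Den = (Sf * Rf t) * Den"
    using main_eq[OF t] Rf_Den[OF t0] unfolding Den_def by (simp add: mult.assoc)
  ultimately show ?thesis by simp
qed

lemma stride:
  fixes w s :: "nat \<Rightarrow> real"
  assumes k: "0 < k"
  shows "fps_nth (Abs_fps (\<lambda>m. if k dvd m \<and> 0 < m then w (m div k) else 0) * Abs_fps s) n
       = (\<Sum>j\<in>{1..n}. w j * (if int n - int k * int j < 0 then 0 else s (nat (int n - int k * int j))))"
proof -
  have "fps_nth (Abs_fps (\<lambda>m. if k dvd m \<and> 0 < m then w (m div k) else 0) * Abs_fps s) n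
      = (\<Sum>i=0..n. (if k dvd i \<and> 0 < i then w (i div k) else 0) * s (n - i))"
    by (simp add: fps_mult_nth)
  also have "\<dots> = (\<Sum>i\<in>{i\<in>{0..n}. k dvd i \<and> 0 < i}. w (i div k) * s (n - i))"
    unfolding sum.inter_filter[OF finite_atLeastAtMost] by (rule sum.cong) auto
  also have "\<dots> = (\<Sum>j\<in>{j\<in>{1..n}. k * j \<le> n}. w j * s (n - k * j))"
  proof -
    have im: "{i\<in>{0..n}. k dvd i \<and> 0 < i} = (\<lambda>j. k * j) ` {j\<in>{1..n}. k * j \<le> n}"
    proof (intro set_eqI iffI)
      fix i assume i: "i \<in> {i\<in>{0..n}. k dvd i \<and> 0 < i}"
      then obtain j where j: "i = k * j" by (auto elim: dvdE)
      have jk: "j \<le> k * j" using k by simp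
      have kjn: "k * j \<le> n" using i j by simp
      have jn: "j \<le> n" using jk kjn by linarith
      have j0: "0 < j" using i j by (cases j) auto
      have "j \<in> {j\<in>{1..n}. k * j \<le> n}" using jn j0 kjn by simp
      then show "i \<in> (\<lambda>j. k * j) ` {j\<in>{1..n}. k * j \<le> n}" using j by blast
    qed (use k in auto)
    have inj: "inj_on (\<lambda>j. k * j) {j\<in>{1..n}. k * j \<le> n}" using k by (auto simp: inj_on_def)
    show ?thesis unfolding im sum.reindex[OF inj] o_def using k by simp
  qed
  also have "\<dots> = (\<Sum>j\<in>{1..n}. w j * (if int n - int k * int j < 0 then 0 else s (nat (int n - int k * int j))))"
  proof -
    have "(\<Sum>j\<in>{1..n}. w j * (if int n - int k * int j < 0 then 0 else s (nat (int n - int k * int j))))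
        = (\<Sum>j\<in>{1..n}. if k * j \<le> n then w j * s (n - k * j) else 0)"
    proof (rule sum.cong)
      fix j assume "j \<in> {1..n}"
      show "w j * (if int n - int k * int j < 0 then 0 else s (nat (int n - int k * int j)))
          = (if k * j \<le> n then w j * s (n - k * j) else 0)"
      proof (cases "k * j \<le> n")
        case True
        then have e: "int n - int k * int j = int (n - k * j)" by (simp add: of_nat_diff)
        then have ne: "\<not> (int n - int k * int j < 0)" by simp
        have nn: "nat (int n - int k * int j) = n - k * j" using e by simp
        show ?thesis by (simp only: if_not_P[OF ne] if_P[OF True] nn)
      next
        case False
        then have "int n - int k * int j < 0" by (simp add: of_nat_mult[symmetric] del: of_nat_mult)
        then show ?thesis using False by simp
      qed
    qed simp
    moreover have "(\<Sum>j\<in>{j\<in>{1..n}. k * j \<le> n}. w j * s (n - k * j))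
        = (\<Sum>j\<in>{1..n}. if k * j \<le> n then w j * s (n - k * j) else 0)"
      by (rule sum.inter_filter) simp
    ultimately show ?thesis by simp
  qed
  finally show ?thesis .
qed


lemma Af_lhs:
  assumes t: "odd t"
  shows "Abs_fps (\<lambda>n. if n = 0 then 0 else real (a_star t n)) = Af t"
proof (rule fps_ext)
  fix n
  have t0: "0 < t" using t by (rule odd_pos)
  have A0: "Aq t 0 = 0" using R3[OF t, of 0] R1'[OF t t0] R2'[OF t, of 0] t0 by simp
  show "fps_nth (Abs_fps (\<lambda>n. if n = 0 then 0 else real (a_star t n))) n = fps_nth (Af t) n"
    using A0 astar_Aq[OF t0] by (simp add: Af_def)
qed

lemma Rf_split:
  assumes t: "0 < t"
  shows "Rf t = Abs_fps (\<lambda>m. if t dvd m \<and> 0 < m then (-1) ^ (m div t - 1) * real (m div t) else 0)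
              + Abs_fps (\<lambda>m. if (2 * t) dvd m \<and> 0 < m then real t else 0)"
proof (rule fps_ext)
  fix m
  show "fps_nth (Rf t) m = fps_nth (Abs_fps (\<lambda>m. if t dvd m \<and> 0 < m then (-1) ^ (m div t - 1) * real (m div t) else 0)
              + Abs_fps (\<lambda>m. if (2 * t) dvd m \<and> 0 < m then real t else 0)) m"
  proof (cases "t dvd m")
    case True
    then obtain j where m: "m = t * j" by (auto elim: dvdE)
    have d: "m div t = j" using m t by simp
    have e: "(2 * t) dvd m \<longleftrightarrow> even j" using m t by (auto simp: mult.commute[of 2 t])
    show ?thesis
    proof (cases "j = 0")
      case True then show ?thesis using m by (simp add: Rf_def Rj_def)
    next
      case False
      then have m0: "0 < m" using m t by simp
      show ?thesis
      proof (cases "even j")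
        case True
        then have "(-1 :: real) ^ (j - 1) = -1" using False by (simp add: power_minus1_odd[symmetric] del: power_minus1_odd)
        then show ?thesis using True False m0 d e \<open>t dvd m\<close> by (simp add: Rf_def Rj_def)
      next
        case odd: False
        from odd obtain k where "j = 2 * k + 1" by (auto elim: oddE)
        then have "(-1 :: real) ^ (j - 1) = 1" by simp
        then show ?thesis using odd False m0 d e \<open>t dvd m\<close> by (simp add: Rf_def Rj_def)
      qed
    qed
  next
    case False
    then have "\<not> (2 * t) dvd m" using dvd_mult_right by blast
    then show ?thesis using False by (simp add: Rf_def)
  qed
qed

lemma coeff:
  assumes t: "odd t"
  shows "real (a_star t n) = (\<Sum>j\<in>{1..n}. (-1) ^ (j - 1) * real j * (if int n - int t * int j < 0 then 0 else real (Sq (nat (int n - int t * int j))))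
       + real t * (if int n - 2 * int t * int j < 0 then 0 else real (Sq (nat (int n - 2 * int t * int j)))))"
proof -
  have t0: "0 < t" using t by (rule odd_pos)
  have "real (a_star t n) = fps_nth (Af t) n" using astar_Aq[OF t0] by (simp add: Af_def)
  also have "\<dots> = fps_nth (Rf t * Sf) n" using Af_eq[OF t] by (simp add: mult.commute)
  also have "\<dots> = fps_nth (Abs_fps (\<lambda>m. if t dvd m \<and> 0 < m then (-1) ^ (m div t - 1) * real (m div t) else 0) * Sf) n
       + fps_nth (Abs_fps (\<lambda>m. if (2 * t) dvd m \<and> 0 < m then real t else 0) * Sf) n"
    unfolding Rf_split[OF t0] by (simp add: distrib_right)
  also have "\<dots> = (\<Sum>j\<in>{1..n}. (-1) ^ (j - 1) * real j * (if int n - int t * int j < 0 then 0 else real (Sq (nat (int n - int t * int j)))))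
       + (\<Sum>j\<in>{1..n}. real t * (if int n - 2 * int t * int j < 0 then 0 else real (Sq (nat (int n - 2 * int t * int j)))))"
  proof -
    have i2: "int (2 * t) = 2 * int t" by simp
    note s1 = stride[OF t0, of "\<lambda>j. (-1) ^ (j - 1) * real j" "\<lambda>n. real (Sq n)" n]
    note s2 = stride[of "2 * t" "\<lambda>j. real t" "\<lambda>n. real (Sq n)" n, unfolded i2]
    show ?thesis unfolding Sf_def s1 using s2 t0 by simp
  qed
  also have "\<dots> = (\<Sum>j\<in>{1..n}. (-1) ^ (j - 1) * real j * (if int n - int t * int j < 0 then 0 else real (Sq (nat (int n - int t * int j))))
       + real t * (if int n - 2 * int t * int j < 0 then 0 else real (Sq (nat (int n - 2 * int t * int j)))))"
    by (rule sum.distrib[symmetric])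
  finally show ?thesis .
qed

theorem theorem1p2:
  fixes t :: nat
  assumes "odd t"
  shows "(Abs_fps (\<lambda>n. if n = 0 then 0 else real (a_star t n))
           = (fps_X ^ t * (1 + of_nat (t - 1) * fps_X ^ t + of_nat t * fps_X ^ (2 * t)))
             / ((1 - fps_X ^ (2 * t)) * (1 + fps_X ^ t)) * odd_poch)
    \<and> (\<forall>n \<ge> 1. int (a_star t n)
           = (\<Sum>j \<in> {1..n}. (-1) ^ (j - 1) * int j * int (sc (int n - int t * int j))
                              + int t * int (sc (int n - 2 * int t * int j))))
    \<and> (\<forall>n \<ge> 1. int (a_star t n)
           = (\<Sum>j \<in> {1..n}. (-1) ^ (j - 1) * int j * int (qstar (int n - int t * int j))
                              + int t * int (qstar (int n - 2 * int t * int j))))"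
proof (intro conjI allI impI)
  have t: "odd t" by fact
  have t0: "0 < t" using t by (rule odd_pos)
  define Den :: "real fps" where "Den = (1 - fps_X ^ (2 * t)) * (1 + fps_X ^ t)"
  define N :: "real fps" where "N = fps_X ^ t * (1 + of_nat (t - 1) * fps_X ^ t + of_nat t * fps_X ^ (2 * t))"
  have D0: "fps_nth Den 0 \<noteq> 0" using t0 by (simp add: Den_def)
  have "N / Den = N * inverse Den" by (rule fps_divide_unit[OF D0])
  also have "\<dots> = Rf t * (Den * inverse Den)" using Rf_Den[OF t0] unfolding N_def Den_def by (simp add: mult.assoc)
  also have "\<dots> = Rf t" using inverse_mult_eq_1'[OF D0] by simp
  finally have ND: "N / Den = Rf t" .
  show "Abs_fps (\<lambda>n. if n = 0 then 0 else real (a_star t n))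
           = (fps_X ^ t * (1 + of_nat (t - 1) * fps_X ^ t + of_nat t * fps_X ^ (2 * t)))
             / ((1 - fps_X ^ (2 * t)) * (1 + fps_X ^ t)) * odd_poch"
    using ND Af_lhs[OF t] Af_eq[OF t] odd_poch_Sf unfolding N_def Den_def by (simp add: mult.commute)
next
  fix n :: nat
  have sc': "\<And>z. real (sc z) = (if z < 0 then 0 else real (Sq (nat z)))" by (simp add: sc_Sq)
  have "real_of_int (int (a_star t n)) = real_of_int (\<Sum>j \<in> {1..n}. (-1) ^ (j - 1) * int j * int (sc (int n - int t * int j))
                              + int t * int (sc (int n - 2 * int t * int j)))"
    using coeff[OF assms, of n] by (simp add: sc')
  then show "int (a_star t n) = (\<Sum>j \<in> {1..n}. (-1) ^ (j - 1) * int j * int (sc (int n - int t * int j))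
                              + int t * int (sc (int n - 2 * int t * int j)))"
    using of_int_eq_iff by blast
next
  fix n :: nat
  have sc': "\<And>z. real (qstar z) = (if z < 0 then 0 else real (Sq (nat z)))" by (simp add: qstar_Sq)
  have "real_of_int (int (a_star t n)) = real_of_int (\<Sum>j \<in> {1..n}. (-1) ^ (j - 1) * int j * int (qstar (int n - int t * int j))
                              + int t * int (qstar (int n - 2 * int t * int j)))"
    using coeff[OF assms, of n] by (simp add: sc')
  then show "int (a_star t n) = (\<Sum>j \<in> {1..n}. (-1) ^ (j - 1) * int j * int (qstar (int n - int t * int j))
                              + int t * int (qstar (int n - 2 * int t * int j)))"
    using of_int_eq_iff by blast
qed


end
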